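(* Let $v:\mathcal Q\to\mathbb R$ be the valuation induced by an assignment message (as defined in the context). Then $v$ satisfies multi-unit strong exchangeability: for every price vector $\mathbf p\in\mathbb R^n$ and all bundles $\mathbf q,\mathbf r\in D(\mathbf p)$ with $\sum_i q_i=\sum_i r_i=\min_{\mathbf q'\in D(\mathbf p)}\sum_i q'_i$, there is a set $\sigma\subseteq \operatorname{supp}_+(\mathbf q-\mathbf r)\times\operatorname{supp}_+(\mathbf r-\mathbf q)$ such that (1) for each $(i,j)\in\sigma$, both $\mathbf q-\mathbf e_i+\mathbf e_j\in D(\mathbf p)$ and $\mathbf r+\mathbf e_i-\mathbf e_j\in D(\mathbf p)$; (2) for each $i\in\operatorname{supp}_+(\mathbf q-\mathbf r)$ we have $1\le|\{j':(i,j')\in\sigma\}|\le q_i-r_i$, and for each $j\in\operatorname{supp}_+(\mathbf r-\mathbf q)$ we have $1\le |\{i':(i',j)\in\sigma\}|\le r_j-q_j$.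
   Context: There are $n\ge 2$ types of goods. A bundle is $\mathbf q\in\mathbb Z^n$; a valuation is a function $v:\mathcal Q\to\mathbb R$ on a finite set $\mathcal Q\subset\mathbb Z^n$ with $0\in\mathcal Q$. For a price vector $\mathbf p\in\mathbb R^n$, the demand set is $D(\mathbf p)=\arg\max_{\mathbf q\in\mathcal Q}\, v(\mathbf q)-\langle\mathbf p,\mathbf q\rangle$. $\mathbf e_i$ is the $i$-th standard unit vector, and $\operatorname{supp}_+(\mathbf a-\mathbf b)=\{i: a_i-b_i>0\}$. A family $\mathcal T$ of subsets of a finite set $J$ is a tree if it is nonempty and any $K,L\in\mathcal T$ with $K\cap L\neq\emptyset$ satisfy $K\subseteq L$ or $L\subseteq K$. An assignment message consists of: variables indexed by $J=\{1,\dots,m\}$, each $j\in J$ associated with a good $k_j\in\{1,\dots,n\}$ and a value $v_j\in\mathbb R$; with $R_i=\{j\in J:k_j=i\}$ assumed nonempty for every $i$, and $R_0:=J$; a family $\mathcal I$ of subsets of $J$, each $I\in\mathcal I$ having integral bounds $\ell(I)\le 0\le u(I)$; such that $\mathcal I=\mathcal T_0\cup\mathcal T_1\cup\dots\cup\mathcal T_n$ where each $\mathcal T_i$ is a tree, for $i\ge 1$: $\mathcal T_i\subseteq\mathcal P(R_i)$, $R_i\in\mathcal T_i$ and $\{j\}\in\mathcal T_i$ for all $j\in R_i$; and $J\in\mathcal T_0$, $\{j\}\in\mathcal T_0$ for all $j\in J$. The induced valuation is $v(\mathbf q)=\max\{\sum_{j=1}^m v_jx_j : \mathbf x\in\mathbb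 Z^m,\ \ell(I)\le\sum_{j\in I}x_j\le u(I)\ \forall I\in\mathcal I,\ \sum_{j\in R_i}x_j=q_i\ \forall i=1,\dots,n\}$, with $\mathcal Q$ the (finite) set of $\mathbf q\in\mathbb Z^n$ for which this program is feasible. *)

theory Defs
  imports Complex_Main
begin

text \<open>Bundles, price vectors and
  integral solution vectors are functions on nat (values outside the index range
  are irrelevant resp. forced to zero for bundles).\<close>

definition is_tree :: "nat set set \<Rightarrow> bool" where
  "is_tree T \<longleftrightarrow> T \<noteq> {} \<and> (\<forall>K\<in>T. \<forall>L\<in>T. K \<inter> L \<noteq> {} \<longrightarrow> K \<subseteq> L \<or> L \<subseteq> K)"

definition goods_var :: "nat \<Rightarrow> (nat \<Rightarrow> nat) \<Rightarrow> nat \<Rightarrow> nat set" where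
  "goods_var m k i = {j \<in> {1..m}. k j = i}"

definition assignment_message ::
  "nat \<Rightarrow> nat \<Rightarrow> (nat \<Rightarrow> nat) \<Rightarrow> (nat \<Rightarrow> real) \<Rightarrow> nat set set
   \<Rightarrow> (nat set \<Rightarrow> int) \<Rightarrow> (nat set \<Rightarrow> int) \<Rightarrow> (nat \<Rightarrow> nat set set) \<Rightarrow> bool" where
  "assignment_message n m k w \<I> l u T \<longleftrightarrow>
     (\<forall>j\<in>{1..m}. k j \<in> {1..n}) \<and>
     (\<forall>i\<in>{1..n}. goods_var m k i \<noteq> {}) \<and>
     (\<forall>I\<in>\<I>. l I \<le> 0 \<and> 0 \<le> u I) \<and>
     \<I> = (\<Union>i\<in>{0..n}. T i) \<and>
     (\<forall>i\<in>{0..n}. is_tree (T i)) \<and>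
     (\<forall>i\<in>{1..n}. T i \<subseteq> Pow (goods_var m k i) \<and> goods_var m k i \<in> T i \<and>
                  (\<forall>j\<in>goods_var m k i. {j} \<in> T i)) \<and>
     T 0 \<subseteq> Pow {1..m} \<and> {1..m} \<in> T 0 \<and> (\<forall>j\<in>{1..m}. {j} \<in> T 0)"

definition am_feasible ::
  "nat \<Rightarrow> nat \<Rightarrow> (nat \<Rightarrow> nat) \<Rightarrow> nat set set \<Rightarrow> (nat set \<Rightarrow> int) \<Rightarrow> (nat set \<Rightarrow> int)
   \<Rightarrow> (nat \<Rightarrow> int) \<Rightarrow> (nat \<Rightarrow> int) \<Rightarrow> bool" where
  "am_feasible n m k \<I> l u x q \<longleftrightarrow>
     (\<forall>I\<in>\<I>. l I \<le> (\<Sum>j\<in>I. x j) \<and> (\<Sum>j\<in>I. x j) \<le> u I) \<and>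
     (\<forall>i\<in>{1..n}. (\<Sum>j\<in>goods_var m k i. x j) = q i)"

definition am_bundles ::
  "nat \<Rightarrow> nat \<Rightarrow> (nat \<Rightarrow> nat) \<Rightarrow> nat set set \<Rightarrow> (nat set \<Rightarrow> int) \<Rightarrow> (nat set \<Rightarrow> int)
   \<Rightarrow> (nat \<Rightarrow> int) set" where
  "am_bundles n m k \<I> l u =
     {q. (\<forall>i. i \<notin> {1..n} \<longrightarrow> q i = 0) \<and> (\<exists>x. am_feasible n m k \<I> l u x q)}"

definition am_valuation ::
  "nat \<Rightarrow> nat \<Rightarrow> (nat \<Rightarrow> nat) \<Rightarrow> (nat \<Rightarrow> real) \<Rightarrow> nat set set \<Rightarrow> (nat set \<Rightarrow> int)
   \<Rightarrow> (nat set \<Rightarrow> int) \<Rightarrow> (nat \<Rightarrow> int) \<Rightarrow> real" where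
  "am_valuation n m k w \<I> l u q =
     Max {(\<Sum>j\<in>{1..m}. w j * real_of_int (x j)) | x. am_feasible n m k \<I> l u x q}"

definition price_pair :: "nat \<Rightarrow> (nat \<Rightarrow> real) \<Rightarrow> (nat \<Rightarrow> int) \<Rightarrow> real" where
  "price_pair n p q = (\<Sum>i\<in>{1..n}. p i * real_of_int (q i))"

definition demand ::
  "nat \<Rightarrow> (nat \<Rightarrow> int) set \<Rightarrow> ((nat \<Rightarrow> int) \<Rightarrow> real) \<Rightarrow> (nat \<Rightarrow> real) \<Rightarrow> (nat \<Rightarrow> int) set" where
  "demand n Q v p = {q \<in> Q. \<forall>q'\<in>Q. v q' - price_pair n p q' \<le> v q - price_pair n p q}"

definition unit_vec :: "nat \<Rightarrow> nat \<Rightarrow> int" where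
  "unit_vec i = (\<lambda>k. if k = i then 1 else 0)"

definition supp_pos :: "nat \<Rightarrow> (nat \<Rightarrow> int) \<Rightarrow> (nat \<Rightarrow> int) \<Rightarrow> nat set" where
  "supp_pos n a b = {i \<in> {1..n}. a i - b i > 0}"

definition bsize :: "nat \<Rightarrow> (nat \<Rightarrow> int) \<Rightarrow> int" where
  "bsize n q = (\<Sum>i\<in>{1..n}. q i)"

end

theory Submission
  imports Defs "HOL-Library.FuncSet"
begin

definition matching :: "('a \<times> 'a) set \<Rightarrow> bool" where
  "matching M \<longleftrightarrow> inj_on fst M \<and> inj_on snd M"

definition matched :: "('a \<times> 'a) set \<Rightarrow> 'a set" where
  "matched M = fst ` M \<union> snd ` M"

lemma blocks:
  fixes \<psi> :: "'a \<Rightarrow> int"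
  assumes "finite W" "matching M" "fst ` M \<inter> snd ` M = {}"
    and closed: "\<forall>(a,b)\<in>M. a \<in> W \<longleftrightarrow> b \<in> W"
    and P0: "P 0" and Padd: "\<And>x y. P x \<Longrightarrow> P y \<Longrightarrow> P (x + y)"
    and Ppair: "\<And>a b. (a,b)\<in>M \<Longrightarrow> a \<in> W \<Longrightarrow> P (\<psi> a + \<psi> b)"
    and Punm: "\<And>w. w \<in> W \<Longrightarrow> w \<notin> matched M \<Longrightarrow> P (\<psi> w)"
  shows "P (\<Sum>w\<in>W. \<psi> w)"
  using assms(1) closed Ppair Punm
proof (induction W rule: finite_psubset_induct)
  case (psubset W)
  show ?case
  proof (cases "W = {}")
    case True then show ?thesis using P0 by simp
  next
    case False
    then obtain w where w: "w \<in> W" by blast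
    show ?thesis
    proof (cases "w \<in> matched M")
      case False
      let ?W = "W - {w}"
      have cl: "\<forall>(a,b)\<in>M. a \<in> ?W \<longleftrightarrow> b \<in> ?W"
        using psubset.prems(1) False unfolding matched_def by (force simp: image_iff)
      have "P (\<Sum>w\<in>?W. \<psi> w)"
        apply (rule psubset.IH) using w cl psubset.prems by auto
      moreover have "(\<Sum>w\<in>W. \<psi> w) = \<psi> w + (\<Sum>w\<in>?W. \<psi> w)"
        using w psubset.hyps by (simp add: sum.remove)
      ultimately show ?thesis using Padd psubset.prems(3) w False by simp
    next
      case True
      then obtain a b where ab: "(a,b) \<in> M" "w = a \<or> w = b" unfolding matched_def by force
      have aW: "a \<in> W" "b \<in> W" using ab w psubset.prems(1) by auto
      have neq: "a \<noteq> b" using ab assms(3) by force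
      let ?W = "W - {a,b}"
      have cl: "\<forall>(a',b')\<in>M. a' \<in> ?W \<longleftrightarrow> b' \<in> ?W"
      proof (intro ballI, clarify)
        fix a' b' assume p: "(a',b') \<in> M"
        have i1: "a' = a \<longleftrightarrow> b' = b" using p ab assms(2) unfolding matching_def inj_on_def by force
        have i2: "a' \<noteq> b" using p ab assms(3) by force
        have i3: "b' \<noteq> a" using p ab assms(3) by force
        show "a' \<in> ?W \<longleftrightarrow> b' \<in> ?W" using i1 i2 i3 p psubset.prems(1) by auto
      qed
      have "P (\<Sum>w\<in>?W. \<psi> w)"
        apply (rule psubset.IH) using aW cl psubset.prems by auto
      moreover have "(\<Sum>w\<in>W. \<psi> w) = (\<psi> a + \<psi> b) + (\<Sum>w\<in>?W. \<psi> w)"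
      proof -
        have "(\<Sum>w\<in>W. \<psi> w) = \<psi> a + (\<Sum>w\<in>W-{a}. \<psi> w)"
          using aW psubset.hyps by (simp add: sum.remove)
        also have "(\<Sum>w\<in>W-{a}. \<psi> w) = \<psi> b + (\<Sum>w\<in>W-{a}-{b}. \<psi> w)"
          using aW neq psubset.hyps by (simp add: sum.remove)
        moreover have "W-{a}-{b} = ?W" by auto
        ultimately show ?thesis by simp
      qed
      ultimately show ?thesis using Padd psubset.prems(2) ab aW by simp
    qed
  qed
qed

definition laminar :: "nat set set \<Rightarrow> bool" where
  "laminar T \<longleftrightarrow> (\<forall>K\<in>T. \<forall>L\<in>T. K \<inter> L \<noteq> {} \<longrightarrow> K \<subseteq> L \<or> L \<subseteq> K)"

locale units =
  fixes U :: "'u set" and var :: "'u \<Rightarrow> nat" and sg :: "'u \<Rightarrow> int"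
  assumes finU: "finite U" and sgU: "\<And>u. u \<in> U \<Longrightarrow> sg u = 1 \<or> sg u = -1"
begin

definition DD :: "nat set \<Rightarrow> int" where
  "DD K = (\<Sum>u\<in>{u\<in>U. var u \<in> K}. sg u)"

definition UX :: "nat set \<Rightarrow> 'u set" where
  "UX X = {u\<in>U. var u \<in> X}"

definition good :: "nat set set \<Rightarrow> nat set \<Rightarrow> ('u \<times> 'u) set \<Rightarrow> bool" where
  "good T X M \<longleftrightarrow> M \<subseteq> UX X \<times> UX X \<and> (\<forall>(a,b)\<in>M. sg a = 1 \<and> sg b = -1) \<and> matching M \<and>
     (\<forall>(a,b)\<in>M. \<forall>K\<in>T. K \<subseteq> X \<longrightarrow> (var a \<in> K \<and> var b \<notin> K \<longrightarrow> DD K > 0) \<and>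
                                    (var b \<in> K \<and> var a \<notin> K \<longrightarrow> DD K < 0)) \<and>
     (\<forall>w\<in>UX X. w \<notin> matched M \<longrightarrow> (\<forall>K\<in>T. K \<subseteq> X \<longrightarrow> var w \<in> K \<longrightarrow> sg w * DD K > 0))"

lemma pool_match:
  assumes "finite P" "P \<subseteq> U"
  shows "\<exists>Mp s. Mp \<subseteq> P \<times> P \<and> (\<forall>(a,b)\<in>Mp. sg a = 1 \<and> sg b = -1) \<and> matching Mp \<and>
           (\<forall>w\<in>P. w \<notin> matched Mp \<longrightarrow> sg w = s)"
proof -
  let ?Pp = "{w\<in>P. sg w = 1}" and ?Pn = "{w\<in>P. sg w = -1}"
  have fin: "finite ?Pp" "finite ?Pn" using assms by auto
  have split: "\<And>w. w \<in> P \<Longrightarrow> w \<in> ?Pp \<or> w \<in> ?Pn" using assms sgU by auto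
  show ?thesis
  proof (cases "card ?Pp \<le> card ?Pn")
    case True
    then obtain h where h: "h ` ?Pp \<subseteq> ?Pn" "inj_on h ?Pp" using card_le_inj[OF fin(1) fin(2)] by auto
    let ?M = "(\<lambda>a. (a, h a)) ` ?Pp"
    have m1: "matching ?M" unfolding matching_def
      by (auto simp: inj_on_def intro: inj_onD[OF h(2)])
    have m2: "\<forall>w\<in>P. w \<notin> matched ?M \<longrightarrow> sg w = -1"
      using split unfolding matched_def by force
    have m3: "?M \<subseteq> P \<times> P" "\<forall>(a,b)\<in>?M. sg a = 1 \<and> sg b = -1" using h by auto
    show ?thesis apply (rule exI[of _ ?M], rule exI[of _ "-1"]) using m1 m2 m3 by simp
  next
    case False
    then have "card ?Pn \<le> card ?Pp" by simp
    then obtain h where h: "h ` ?Pn \<subseteq> ?Pp" "inj_on h ?Pn" using card_le_inj[OF fin(2) fin(1)] by auto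
    let ?M = "(\<lambda>b. (h b, b)) ` ?Pn"
    have m1: "matching ?M" unfolding matching_def
      by (auto simp: inj_on_def intro: inj_onD[OF h(2)])
    have m2: "\<forall>w\<in>P. w \<notin> matched ?M \<longrightarrow> sg w = 1"
      using split unfolding matched_def by force
    have m3: "?M \<subseteq> P \<times> P" "\<forall>(a,b)\<in>?M. sg a = 1 \<and> sg b = -1" using h by auto
    show ?thesis apply (rule exI[of _ ?M], rule exI[of _ 1]) using m1 m2 m3 by simp
  qed
qed


lemma matching_Un: "matching A \<Longrightarrow> matching B \<Longrightarrow> matched A \<inter> matched B = {} \<Longrightarrow> matching (A \<union> B)"
  unfolding matching_def matched_def inj_on_def by blast

lemma matching_UN:
  assumes "\<forall>C\<in>S. matching (F C)" "\<forall>C\<in>S. \<forall>C'\<in>S. C \<noteq> C' \<longrightarrow> matched (F C) \<inter> matched (F C') = {}"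
  shows "matching (\<Union>C\<in>S. F C)"
  unfolding matching_def
proof (intro conjI inj_onI)
  fix x y assume x: "x \<in> (\<Union>C\<in>S. F C)" and y: "y \<in> (\<Union>C\<in>S. F C)" and e: "fst x = fst y"
  obtain C C' where C: "C \<in> S" "x \<in> F C" "C' \<in> S" "y \<in> F C'" using x y by blast
  have "C = C'"
  proof (rule ccontr)
    assume "C \<noteq> C'"
    then have "matched (F C) \<inter> matched (F C') = {}" using assms(2) C by blast
    moreover have "fst x \<in> matched (F C)" "fst y \<in> matched (F C')" using C unfolding matched_def by blast+
    ultimately show False using e by auto
  qed
  then show "x = y" using assms(1) C e unfolding matching_def by (metis inj_onD)
next
  fix x y assume x: "x \<in> (\<Union>C\<in>S. F C)" and y: "y \<in> (\<Union>C\<in>S. F C)" and e: "snd x = snd y"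
  obtain C C' where C: "C \<in> S" "x \<in> F C" "C' \<in> S" "y \<in> F C'" using x y by blast
  have "C = C'"
  proof (rule ccontr)
    assume "C \<noteq> C'"
    then have "matched (F C) \<inter> matched (F C') = {}" using assms(2) C by blast
    moreover have "snd x \<in> matched (F C)" "snd y \<in> matched (F C')" using C unfolding matched_def by blast+
    ultimately show False using e by auto
  qed
  then show "x = y" using assms(1) C e unfolding matching_def by (metis inj_onD)
qed

lemma sum_matched_zero:
  assumes "M \<subseteq> U \<times> U" "\<forall>(a,b)\<in>M. sg a = 1 \<and> sg b = -1" "matching M"
  shows "(\<Sum>w\<in>matched M. sg w) = 0"
proof -
  have fin: "finite (matched M)" using assms(1) finU unfolding matched_def
    by (metis (no_types, lifting) finite_SigmaI finite_imageI finite_subset finite_Un)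
  have disj: "fst ` M \<inter> snd ` M = {}"
  proof (rule ccontr)
    assume "fst ` M \<inter> snd ` M \<noteq> {}"
    then obtain p p' where "p \<in> M" "p' \<in> M" "fst p = snd p'" by blast
    then show False using assms(2) by (metis (mono_tags, lifting) case_prod_beta one_neq_neg_one)
  qed
  have cl: "\<forall>(a,b)\<in>M. a \<in> matched M \<longleftrightarrow> b \<in> matched M"
  proof (clarify)
    fix a b assume "(a,b) \<in> M"
    then have "a \<in> fst ` M" "b \<in> snd ` M" by (force intro: rev_image_eqI)+
    then show "a \<in> matched M \<longleftrightarrow> b \<in> matched M" unfolding matched_def by blast
  qed
  show ?thesis
    apply (rule blocks[where P="\<lambda>z. z = 0", OF fin assms(3) disj cl])
    using assms(2) by auto
qed


lemma goodD:
  assumes "good T X M"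
  shows "M \<subseteq> UX X \<times> UX X" "\<And>a b. (a,b)\<in>M \<Longrightarrow> sg a = 1 \<and> sg b = -1" "matching M"
    "\<And>a b K. (a,b)\<in>M \<Longrightarrow> K\<in>T \<Longrightarrow> K\<subseteq>X \<Longrightarrow> var a \<in> K \<Longrightarrow> var b \<notin> K \<Longrightarrow> DD K > 0"
    "\<And>a b K. (a,b)\<in>M \<Longrightarrow> K\<in>T \<Longrightarrow> K\<subseteq>X \<Longrightarrow> var b \<in> K \<Longrightarrow> var a \<notin> K \<Longrightarrow> DD K < 0"
    "\<And>w K. w\<in>UX X \<Longrightarrow> w \<notin> matched M \<Longrightarrow> K\<in>T \<Longrightarrow> K\<subseteq>X \<Longrightarrow> var w \<in> K \<Longrightarrow> sg w * DD K > 0"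
  using assms unfolding good_def by auto

lemma tree_match:
  assumes finT: "finite T" and finK: "\<forall>K\<in>T. finite K" and lam: "laminar T"
  shows "X \<in> T \<Longrightarrow> \<exists>M. good T X M"
proof (induction X rule: measure_induct_rule[where f=card])
  case (less X)
  define Ch where "Ch = {C\<in>T. C \<subset> X \<and> (\<forall>C'\<in>T. C \<subseteq> C' \<and> C' \<subset> X \<longrightarrow> C' = C)}"
  have Ch_sub: "\<And>C. C \<in> Ch \<Longrightarrow> C \<in> T \<and> C \<subset> X" unfolding Ch_def by auto
  have Ch_disj: "\<And>C C'. C \<in> Ch \<Longrightarrow> C' \<in> Ch \<Longrightarrow> C \<noteq> C' \<Longrightarrow> C \<inter> C' = {}"
  proof -
    fix C C' assume a: "C \<in> Ch" "C' \<in> Ch" "C \<noteq> C'"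
    show "C \<inter> C' = {}"
    proof (rule ccontr)
      assume "C \<inter> C' \<noteq> {}"
      then have "C \<subseteq> C' \<or> C' \<subseteq> C" using lam a Ch_sub unfolding laminar_def by blast
      then show False using a unfolding Ch_def by blast
    qed
  qed
  have Ch_cover: "\<And>K. K \<in> T \<Longrightarrow> K \<subset> X \<Longrightarrow> \<exists>C\<in>Ch. K \<subseteq> C"
  proof -
    fix K assume K: "K \<in> T" "K \<subset> X"
    let ?A = "{C'\<in>T. K \<subseteq> C' \<and> C' \<subset> X}"
    have "finite ?A" using finT by simp
    moreover have "?A \<noteq> {}" using K by blast
    ultimately obtain mm where mm: "mm \<in> ?A" "\<forall>b\<in>?A. mm \<le> b \<longrightarrow> mm = b"
      using finite_has_maximal[of ?A] by blast
    have "mm \<in> Ch" unfolding Ch_def using mm by auto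
    then show "\<exists>C\<in>Ch. K \<subseteq> C" using mm by blast
  qed
  have finX: "finite X" using less.prems finK by blast
  have "\<forall>C\<in>Ch. \<exists>M. good T C M"
  proof
    fix C assume C: "C \<in> Ch"
    then have "card C < card X" using Ch_sub finX psubset_card_mono by blast
    then show "\<exists>M. good T C M" using less.IH C Ch_sub by blast
  qed
  then obtain Mf where Mf: "\<And>C. C \<in> Ch \<Longrightarrow> good T C (Mf C)" by metis
  define Mc where "Mc = (\<Union>C\<in>Ch. Mf C)"
  define P where "P = {w\<in>UX X. w \<notin> matched Mc}"
  have finP: "finite P" "P \<subseteq> U" unfolding P_def UX_def using finU by auto
  obtain Mp s where Mp: "Mp \<subseteq> P \<times> P" "\<forall>(a,b)\<in>Mp. sg a = 1 \<and> sg b = -1" "matching Mp"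
     "\<forall>w\<in>P. w \<notin> matched Mp \<longrightarrow> sg w = s"
    using pool_match[OF finP] by blast
  define M where "M = Mc \<union> Mp"
  have UXmono: "\<And>C. C \<subseteq> X \<Longrightarrow> UX C \<subseteq> UX X" unfolding UX_def by auto
  have MfUX: "\<And>C. C \<in> Ch \<Longrightarrow> Mf C \<subseteq> UX C \<times> UX C" using goodD(1)[OF Mf] by blast
  have matchedMf: "\<And>C. C \<in> Ch \<Longrightarrow> matched (Mf C) \<subseteq> UX C" using MfUX unfolding matched_def by force
  have Mc_sub: "Mc \<subseteq> UX X \<times> UX X" unfolding Mc_def using MfUX UXmono Ch_sub by blast
  have M_sub: "M \<subseteq> UX X \<times> UX X" unfolding M_def using Mc_sub Mp(1) P_def by blast
  have M_sg: "\<forall>(a,b)\<in>M. sg a = 1 \<and> sg b = -1"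
  proof (clarify)
    fix a b assume "(a,b) \<in> M"
    then show "sg a = 1 \<and> sg b = -1"
    proof (cases "(a,b) \<in> Mp")
      case True then show ?thesis using Mp(2) by blast
    next
      case False
      then obtain C where "C \<in> Ch" "(a,b) \<in> Mf C" using \<open>(a,b)\<in>M\<close> unfolding M_def Mc_def by blast
      then show ?thesis using goodD(2)[OF Mf] by blast
    qed
  qed
  have mc_match: "matching Mc" unfolding Mc_def
  proof (rule matching_UN)
    show "\<forall>C\<in>Ch. matching (Mf C)" using goodD(3)[OF Mf] by blast
    show "\<forall>C\<in>Ch. \<forall>C'\<in>Ch. C \<noteq> C' \<longrightarrow> matched (Mf C) \<inter> matched (Mf C') = {}"
    proof (intro ballI impI)
      fix C C' assume "C \<in> Ch" "C' \<in> Ch" "C \<noteq> C'"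
      then have "UX C \<inter> UX C' = {}" using Ch_disj unfolding UX_def by blast
      then show "matched (Mf C) \<inter> matched (Mf C') = {}" using matchedMf \<open>C \<in> Ch\<close> \<open>C' \<in> Ch\<close> by blast
    qed
  qed
  have mMp: "matched Mp \<subseteq> P" using Mp(1) unfolding matched_def by auto
  have M_match: "matching M" unfolding M_def
    apply (rule matching_Un[OF mc_match Mp(3)])
    using mMp unfolding P_def by blast
  have matchedM: "matched M = matched Mc \<union> matched Mp" unfolding M_def matched_def by auto
  have M_conf: "\<forall>(a,b)\<in>M. \<forall>K\<in>T. K \<subseteq> X \<longrightarrow> (var a \<in> K \<and> var b \<notin> K \<longrightarrow> DD K > 0) \<and>
                                    (var b \<in> K \<and> var a \<notin> K \<longrightarrow> DD K < 0)"
  proof (intro ballI impI, clarify)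
    fix a b K assume ab: "(a,b) \<in> M" and K: "K \<in> T" "K \<subseteq> X"
    show "(var a \<in> K \<and> var b \<notin> K \<longrightarrow> DD K > 0) \<and> (var b \<in> K \<and> var a \<notin> K \<longrightarrow> DD K < 0)"
    proof (cases "K = X")
      case True
      then show ?thesis using ab M_sub unfolding UX_def by auto
    next
      case False
      then have KX: "K \<subset> X" using K by blast
      then obtain C where C: "C \<in> Ch" "K \<subseteq> C" using Ch_cover K by blast
      show ?thesis
      proof (cases "(a,b) \<in> Mc")
        case True
        then obtain C' where C': "C' \<in> Ch" "(a,b) \<in> Mf C'" unfolding Mc_def by blast
        have abC': "var a \<in> C'" "var b \<in> C'" using MfUX[OF C'(1)] C'(2) unfolding UX_def by auto
        show ?thesis
        proof (cases "var a \<in> K \<or> var b \<in> K")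
          case True
          then have "C \<inter> C' \<noteq> {}" using abC' C by blast
          then have "C = C'" using Ch_disj C C' by blast
          then have "K \<subseteq> C'" using C by simp
          then show ?thesis using goodD(4,5)[OF Mf[OF C'(1)] C'(2) K(1)] by blast
        next
          case False then show ?thesis by blast
        qed
      next
        case False
        then have abP: "(a,b) \<in> Mp" using ab unfolding M_def by blast
        then have aP: "a \<in> P" "b \<in> P" "sg a = 1" "sg b = -1" using Mp by auto
        have unmC: "\<And>w. w \<in> P \<Longrightarrow> var w \<in> C \<Longrightarrow> w \<in> UX C \<and> w \<notin> matched (Mf C)"
          using C(1) unfolding P_def UX_def Mc_def matched_def by blast
        have g: "\<And>w. w \<in> UX C \<Longrightarrow> w \<notin> matched (Mf C) \<Longrightarrow> var w \<in> K \<Longrightarrow> sg w * DD K > 0"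
          using goodD(6)[OF Mf[OF C(1)] _ _ K(1) C(2)] by blast
        show ?thesis
        proof (intro conjI impI)
          assume "var a \<in> K \<and> var b \<notin> K"
          then have "sg a * DD K > 0" using g unmC aP C(2) by blast
          then show "DD K > 0" using aP by simp
        next
          assume "var b \<in> K \<and> var a \<notin> K"
          then have "sg b * DD K > 0" using g unmC aP C(2) by blast
          then show "DD K < 0" using aP by simp
        qed
      qed
    qed
  qed
  have M_unm: "\<forall>w\<in>UX X. w \<notin> matched M \<longrightarrow> (\<forall>K\<in>T. K \<subseteq> X \<longrightarrow> var w \<in> K \<longrightarrow> sg w * DD K > 0)"
  proof (intro ballI impI)
    fix w K assume w: "w \<in> UX X" "w \<notin> matched M" and K: "K \<in> T" "K \<subseteq> X" "var w \<in> K"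
    show "sg w * DD K > 0"
    proof (cases "K = X")
      case True
      let ?R = "UX X - matched M"
      have Rs: "\<And>w'. w' \<in> ?R \<Longrightarrow> sg w' = s" using Mp(4) matchedM unfolding P_def by blast
      have mUX: "matched M \<subseteq> UX X" using M_sub unfolding matched_def by force
      have finUX: "finite (UX X)" using finU unfolding UX_def by simp
      have "DD X = (\<Sum>u\<in>UX X. sg u)" unfolding DD_def UX_def by simp
      also have "\<dots> = (\<Sum>u\<in>matched M. sg u) + (\<Sum>u\<in>?R. sg u)"
        using sum.subset_diff[OF mUX finUX] by (simp add: add.commute)
      also have "(\<Sum>u\<in>matched M. sg u) = 0"
        apply (rule sum_matched_zero[OF _ M_sg M_match]) using M_sub unfolding UX_def by blast
      also have "(\<Sum>u\<in>?R. sg u) = s * int (card ?R)" using Rs by simp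
      finally have DX: "DD X = s * int (card ?R)" by simp
      have wR: "w \<in> ?R" using w by simp
      have "card ?R > 0" using wR finUX by (metis card_gt_0_iff empty_iff finite_Diff)
      moreover have "sg w = s" using Rs wR by blast
      moreover have "sg w = 1 \<or> sg w = -1" using sgU w unfolding UX_def by blast
      ultimately show ?thesis using True DX by auto
    next
      case False
      then have KX: "K \<subset> X" using K by blast
      then obtain C where C: "C \<in> Ch" "K \<subseteq> C" using Ch_cover K by blast
      have "w \<in> UX C" using w K C unfolding UX_def by blast
      moreover have "w \<notin> matched (Mf C)" using w C(1) matchedM unfolding Mc_def matched_def by blast
      ultimately show ?thesis using goodD(6)[OF Mf[OF C(1)] _ _ K(1) C(2) K(3)] by blast
    qed
  qed
  have "good T X M" unfolding good_def using M_sub M_sg M_match M_conf M_unm by simp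
  then show ?case by blast
qed


end

lemma walk:
  fixes U :: "'u set" and sg :: "'u \<Rightarrow> int" and M0 G :: "('u \<times> 'u) set"
  assumes finU: "finite U" and sgU: "\<forall>u\<in>U. sg u = 1 \<or> sg u = -1"
    and M0U: "M0 \<subseteq> U \<times> U" and M0sg: "\<forall>(a,b)\<in>M0. sg a = 1 \<and> sg b = -1" and M0m: "matching M0"
    and perf: "\<forall>u\<in>U. u \<in> matched M0"
    and GU: "G \<subseteq> U \<times> U" and Gsg: "\<forall>(a,b)\<in>G. sg a = 1 \<and> sg b = -1" and Gm: "matching G"
    and u0: "u0 \<in> U" "sg u0 = 1"
  shows "\<exists>S \<subseteq> U. S \<noteq> {} \<and> (\<forall>(a,b)\<in>M0. a\<in>S \<longleftrightarrow> b\<in>S) \<and> (\<forall>(a,b)\<in>G. a\<in>S \<longleftrightarrow> b\<in>S) \<and>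
     ({w\<in>S. w \<notin> matched G} = {} \<or>
      (\<exists>a b. {w\<in>S. w \<notin> matched G} = {a,b} \<and> sg a = 1 \<and> sg b = -1))"
proof -
  define Pos where "Pos = {u\<in>U. sg u = 1}"
  define Neg where "Neg = {u\<in>U. sg u = -1}"
  define f where "f u = (THE v. (u,v) \<in> M0)" for u
  define gi where "gi v = (THE u. (u,v) \<in> G)" for v
  have injM0: "inj_on fst M0" "inj_on snd M0" using M0m unfolding matching_def by auto
  have injG: "inj_on fst G" "inj_on snd G" using Gm unfolding matching_def by auto
  have F1: "\<And>u. u \<in> Pos \<Longrightarrow> (u, f u) \<in> M0"
  proof -
    fix u assume u: "u \<in> Pos"
    then have "u \<in> matched M0" using perf Pos_def by auto
    then obtain p where p: "p \<in> M0" "u = fst p \<or> u = snd p" unfolding matched_def by auto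
    have "u = fst p"
    proof (rule ccontr)
      assume "u \<noteq> fst p"
      then have "u = snd p" using p by blast
      then have "sg u = -1" using M0sg p(1) by auto
      then show False using u Pos_def by simp
    qed
    then have ex: "(u, snd p) \<in> M0" using p by simp
    have "\<And>v. (u,v) \<in> M0 \<Longrightarrow> v = snd p" using injM0(1) ex by (metis fst_conv inj_onD snd_conv)
    then have "f u = snd p" unfolding f_def using ex by (rule the_equality[rotated]) 
    then show "(u, f u) \<in> M0" using ex by simp
  qed
  have M0D: "\<And>a b. (a,b) \<in> M0 \<Longrightarrow> a \<in> Pos \<and> b = f a"
  proof -
    fix a b assume ab: "(a,b) \<in> M0"
    then have aP: "a \<in> Pos" using M0sg M0U Pos_def by auto
    then have "(a, f a) \<in> M0" by (rule F1)
    then have "b = f a" using injM0(1) ab by (metis fst_conv inj_onD snd_conv)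
    then show "a \<in> Pos \<and> b = f a" using aP by simp
  qed
  have fNeg: "\<And>u. u \<in> Pos \<Longrightarrow> f u \<in> Neg"
    using F1 M0sg M0U Neg_def by fastforce
  have finj: "\<And>a b. a \<in> Pos \<Longrightarrow> b \<in> Pos \<Longrightarrow> f a = f b \<Longrightarrow> a = b"
    using F1 injM0(2) by (metis fst_conv inj_onD snd_conv)
  have F2: "\<And>v. v \<in> snd ` G \<Longrightarrow> (gi v, v) \<in> G"
  proof -
    fix v assume "v \<in> snd ` G"
    then obtain a where ex: "(a, v) \<in> G" by force
    have "\<And>a'. (a',v) \<in> G \<Longrightarrow> a' = a" using injG(2) ex by (metis fst_conv inj_onD snd_conv)
    then have "gi v = a" unfolding gi_def using ex by (rule the_equality[rotated])
    then show "(gi v, v) \<in> G" using ex by simp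
  qed
  have GD: "\<And>a b. (a,b) \<in> G \<Longrightarrow> a = gi b \<and> a \<in> Pos \<and> b \<in> Neg"
  proof -
    fix a b assume ab: "(a,b) \<in> G"
    then have "(gi b, b) \<in> G" using F2 by force
    then have "a = gi b" using injG(2) ab by (metis fst_conv inj_onD snd_conv)
    then show "a = gi b \<and> a \<in> Pos \<and> b \<in> Neg" using ab Gsg GU Pos_def Neg_def by auto
  qed
  have u0P: "u0 \<in> Pos" using u0 Pos_def by simp
  obtain v0 where v0: "v0 \<in> Pos" "v0 \<in> fst ` G \<Longrightarrow> Pos \<subseteq> fst ` G"
  proof (cases "Pos \<subseteq> fst ` G")
    case True then show ?thesis using that u0P by blast
  next
    case False then show ?thesis using that by blast
  qed
  define s where "s = rec_nat v0 (\<lambda>_ x. gi (f x))"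
  have s0: "s 0 = v0" and sS: "\<And>t. s (Suc t) = gi (f (s t))" unfolding s_def by simp_all
  define ok where "ok t \<longleftrightarrow> f (s t) \<in> snd ` G" for t
  have v0P: "v0 \<in> Pos" using v0 by simp
  have sPos: "\<And>t. (\<forall>t'<t. ok t') \<Longrightarrow> s t \<in> Pos"
  proof -
    fix t show "(\<forall>t'<t. ok t') \<Longrightarrow> s t \<in> Pos"
    proof (induction t)
      case 0 then show ?case using s0 v0P by simp
    next
      case (Suc t)
      then have "ok t" by simp
      then have "(gi (f (s t)), f (s t)) \<in> G" using F2 ok_def by blast
      then show ?case using sS GD by metis
    qed
  qed
  have sucG: "\<And>t. ok t \<Longrightarrow> (s (Suc t), f (s t)) \<in> G" using F2 ok_def sS by metis
  have red: "\<And>a b. (\<forall>t<b. ok t) \<Longrightarrow> a \<le> b \<Longrightarrow> s a = s b \<Longrightarrow> s 0 = s (b - a)"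
  proof -
    fix a show "\<And>b. (\<forall>t<b. ok t) \<Longrightarrow> a \<le> b \<Longrightarrow> s a = s b \<Longrightarrow> s 0 = s (b - a)"
    proof (induction a)
      case 0 then show ?case by simp
    next
      case (Suc a)
      then obtain b' where b': "b = Suc b'" by (cases b) auto
      have oka: "ok a" "ok b'" using Suc.prems b' by auto
      have "(s (Suc a), f (s a)) \<in> G" "(s (Suc b'), f (s b')) \<in> G" using sucG oka by auto
      then have "f (s a) = f (s b')" using Suc.prems(3) b' injG(1) by (metis fst_conv inj_onD snd_conv)
      moreover have "s a \<in> Pos" "s b' \<in> Pos" using sPos Suc.prems b' by auto
      ultimately have "s a = s b'" using finj by blast
      then show ?case using Suc.IH[of b'] Suc.prems b' by auto
    qed
  qed
  have finPos: "finite Pos" using finU Pos_def by simp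
  have nonfin: "\<not> (\<forall>t. ok t) \<or> (\<exists>a b. a < b \<and> s a = s b)"
  proof (rule ccontr)
    assume "\<not> ?thesis"
    then have allok: "\<forall>t. ok t" and inj: "\<forall>a b. a < b \<longrightarrow> s a \<noteq> s b" by auto
    have "inj s" unfolding inj_def by (metis inj linorder_neqE_nat)
    moreover have "range s \<subseteq> Pos" using sPos allok by blast
    ultimately have "finite (UNIV :: nat set)" using finPos by (meson finite_imageD finite_subset)
    then show False by simp
  qed
  show ?thesis
  proof (cases "v0 \<in> fst ` G")
    case False
    have notS: "\<And>t. s (Suc t) \<noteq> v0 \<or> \<not> ok t"
      using sucG False by (metis fst_conv image_eqI)
    have distinct: "\<And>a b. (\<forall>t<b. ok t) \<Longrightarrow> a < b \<Longrightarrow> s a \<noteq> s b"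
    proof
      fix a b assume h: "\<forall>t<b. ok t" "a < b" "s a = s b"
      then have "s 0 = s (b - a)" using red by simp
      then obtain c where c: "b - a = Suc c" "s (Suc c) = v0" using h s0 by (metis Suc_diff_Suc)
      then have "ok c" using h by auto
      then show False using notS c by blast
    qed
    have "\<exists>t. \<not> ok t"
    proof (rule ccontr)
      assume "\<not> (\<exists>t. \<not> ok t)"
      then have "\<forall>t. ok t" by simp
      then show False using nonfin distinct by blast
    qed
    define N where "N = (LEAST t. \<not> ok t)"
    have nokN: "\<not> ok N" unfolding N_def using \<open>\<exists>t. \<not> ok t\<close> by (metis LeastI)
    have okb: "\<And>t. t < N \<Longrightarrow> ok t" unfolding N_def using not_less_Least by blast
    have sP: "\<And>t. t \<le> N \<Longrightarrow> s t \<in> Pos" using sPos okb by auto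
    define S where "S = s ` {..N} \<union> f ` s ` {..N}"
    have PosNeg: "Pos \<inter> Neg = {}" unfolding Pos_def Neg_def by auto
    have inS: "\<And>w. w \<in> S \<Longrightarrow> (\<exists>t\<le>N. w = s t) \<or> (\<exists>t\<le>N. w = f (s t))" unfolding S_def by auto
    have inSP: "\<And>w. w \<in> S \<Longrightarrow> w \<in> Pos \<Longrightarrow> \<exists>t\<le>N. w = s t"
    proof -
      fix w assume w: "w \<in> S" "w \<in> Pos"
      show "\<exists>t\<le>N. w = s t"
      proof (rule ccontr)
        assume "\<not> (\<exists>t\<le>N. w = s t)"
        then obtain t where "t \<le> N" "w = f (s t)" using inS w(1) by blast
        then have "w \<in> Neg" using fNeg sP by simp
        then show False using w(2) PosNeg by blast
      qed
    qed
    have inSN: "\<And>w. w \<in> S \<Longrightarrow> w \<in> Neg \<Longrightarrow> \<exists>t\<le>N. w = f (s t)"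
    proof -
      fix w assume w: "w \<in> S" "w \<in> Neg"
      show "\<exists>t\<le>N. w = f (s t)"
      proof (rule ccontr)
        assume "\<not> (\<exists>t\<le>N. w = f (s t))"
        then obtain t where "t \<le> N" "w = s t" using inS w(1) by blast
        then have "w \<in> Pos" using sP by simp
        then show False using w(2) PosNeg by blast
      qed
    qed
    have SU: "S \<subseteq> U" unfolding S_def using sP fNeg Pos_def Neg_def by auto
    have cl0: "\<forall>(a,b)\<in>M0. a\<in>S \<longleftrightarrow> b\<in>S"
    proof (clarify)
      fix a b assume ab: "(a,b) \<in> M0"
      then have ab': "a \<in> Pos" "b = f a" using M0D by auto
      show "a \<in> S \<longleftrightarrow> b \<in> S"
      proof
        assume "a \<in> S"
        then obtain t where "t \<le> N" "a = s t" using inSP ab' by blast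
        then show "b \<in> S" using ab' S_def by auto
      next
        assume "b \<in> S"
        then obtain t where t: "t \<le> N" "b = f (s t)" using inSN ab' fNeg by blast
        then have "a = s t" using finj ab' sP by metis
        then show "a \<in> S" using t S_def by auto
      qed
    qed
    have clG: "\<forall>(a,b)\<in>G. a\<in>S \<longleftrightarrow> b\<in>S"
    proof (clarify)
      fix a b assume ab: "(a,b) \<in> G"
      then have ab': "a = gi b" "a \<in> Pos" "b \<in> Neg" using GD by auto
      show "a \<in> S \<longleftrightarrow> b \<in> S"
      proof
        assume "a \<in> S"
        then obtain t where t: "t \<le> N" "a = s t" using inSP ab' by blast
        show "b \<in> S"
        proof (cases t)
          case 0 then show ?thesis using t s0 False ab by (metis fst_conv image_eqI)
        next
          case (Suc t')
          then have "ok t'" using okb t by simp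
          then have "(a, f (s t')) \<in> G" using sucG t Suc by simp
          then have "b = f (s t')" using ab injG(1) by (metis fst_conv inj_onD snd_conv)
          then show ?thesis using S_def Suc t by auto
        qed
      next
        assume "b \<in> S"
        then obtain t where t: "t \<le> N" "b = f (s t)" using inSN ab' by blast
        then have "ok t" using ab unfolding ok_def by (metis image_eqI snd_conv)
        then have "t < N" using nokN t by (metis le_neq_implies_less)
        then have "a = s (Suc t)" using ab' sS t by simp
        then show "a \<in> S" using \<open>t < N\<close> S_def by auto
      qed
    qed
    have Z: "{w\<in>S. w \<notin> matched G} = {v0, f (s N)}"
    proof
      show "{w\<in>S. w \<notin> matched G} \<subseteq> {v0, f (s N)}"
      proof
        fix w assume w: "w \<in> {w\<in>S. w \<notin> matched G}"
        then consider (p) t where "t \<le> N" "w = s t" | (n) t where "t \<le> N" "w = f (s t)" using inS by blast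
        then show "w \<in> {v0, f (s N)}"
        proof cases
          case p
          show ?thesis
          proof (cases t)
            case 0 then show ?thesis using p s0 by simp
          next
            case (Suc t')
            then have "(w, f (s t')) \<in> G" using sucG okb p by simp
            then have "w \<in> matched G" unfolding matched_def by (metis UnI1 fst_conv image_eqI)
            then show ?thesis using w by blast
          qed
        next
          case n
          show ?thesis
          proof (cases "t = N")
            case True then show ?thesis using n by simp
          next
            case False
            then have "ok t" using okb n by simp
            then have "w \<in> matched G" using n unfolding ok_def matched_def by blast
            then show ?thesis using w by blast
          qed
        qed
      qed
    next
      have sndG: "snd ` G \<subseteq> Neg" and fstG: "fst ` G \<subseteq> Pos" using GD by force+
      have "v0 \<notin> matched G" using False sndG v0P PosNeg unfolding matched_def by blast
      moreover have "f (s N) \<notin> matched G"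
      proof -
        have "f (s N) \<notin> snd ` G" using nokN unfolding ok_def by blast
        moreover have "f (s N) \<in> Neg" using fNeg sP by simp
        ultimately show ?thesis using fstG PosNeg unfolding matched_def by blast
      qed
      moreover have "v0 \<in> S" "f (s N) \<in> S" unfolding S_def using s0 by (metis UnI1 atMost_iff image_eqI le_refl zero_le, blast)
      ultimately show "{v0, f (s N)} \<subseteq> {w\<in>S. w \<notin> matched G}" by auto
    qed
    have "sg v0 = 1" "sg (f (s N)) = -1" using v0P fNeg sP Neg_def Pos_def by auto
    moreover have "v0 \<in> S" unfolding S_def using s0 by (metis UnI1 atMost_iff image_eqI zero_le)
    ultimately show ?thesis apply (intro exI[of _ S]) using SU cl0 clG Z by blast
  next
    case True
    have PosG: "Pos \<subseteq> fst ` G" using v0 True by blast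
    have PosNeg: "Pos \<inter> Neg = {}" unfolding Pos_def Neg_def by auto
    have sndG: "snd ` G \<subseteq> Neg" and fstG: "fst ` G \<subseteq> Pos" using GD by force+
    have cardG: "card (fst ` G) = card G" "card (snd ` G) = card G"
      using injG card_image by blast+
    have fG: "fst ` G = Pos" using PosG fstG by blast
    have fPos: "f ` Pos = Neg"
    proof
      show "f ` Pos \<subseteq> Neg" using fNeg by blast
      show "Neg \<subseteq> f ` Pos"
      proof
        fix v assume v: "v \<in> Neg"
        then have "v \<in> matched M0" using perf Neg_def by auto
        then obtain p where p: "p \<in> M0" "v = fst p \<or> v = snd p" unfolding matched_def by auto
        have "v \<noteq> fst p" using p(1) M0D v PosNeg by (metis disjoint_iff prod.collapse)
        then have "(fst p, v) \<in> M0" using p by simp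
        then show "v \<in> f ` Pos" using M0D by blast
      qed
    qed
    have finNeg: "finite Neg" using finU Neg_def by simp
    have "card Neg = card Pos" using fPos finj card_image[of f Pos] unfolding inj_on_def by metis
    then have "card (snd ` G) = card Neg" using cardG fG by simp
    then have NegG: "Neg \<subseteq> snd ` G" using card_subset_eq[OF finNeg sndG] by simp
    have allP: "\<And>t. s t \<in> Pos"
    proof -
      fix t show "s t \<in> Pos"
      proof (induction t)
        case 0 then show ?case using s0 v0P by simp
      next
        case (Suc t)
        then have "f (s t) \<in> snd ` G" using fNeg NegG by blast
        then have "(gi (f (s t)), f (s t)) \<in> G" using F2 by blast
        then show ?case using sS GD by metis
      qed
    qed
    have allok: "\<And>t. ok t" unfolding ok_def using allP fNeg NegG by blast
    obtain a b where ab: "a < b" "s a = s b" using nonfin allok by blast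
    then have "s 0 = s (b - a)" using red allok by simp
    then have exL: "\<exists>L. 0 < L \<and> s L = v0" using ab s0 by (metis zero_less_diff)
    define L where "L = (LEAST L. 0 < L \<and> s L = v0)"
    have L: "0 < L" "s L = v0" unfolding L_def using LeastI_ex[OF exL] by auto
    have Lmin: "\<And>L'. 0 < L' \<Longrightarrow> L' < L \<Longrightarrow> s L' \<noteq> v0" unfolding L_def using not_less_Least by blast
    define S where "S = s ` {..<L} \<union> f ` s ` {..<L}"
    have inS: "\<And>w. w \<in> S \<Longrightarrow> (\<exists>t<L. w = s t) \<or> (\<exists>t<L. w = f (s t))" unfolding S_def by auto
    have inSP: "\<And>w. w \<in> S \<Longrightarrow> w \<in> Pos \<Longrightarrow> \<exists>t<L. w = s t"
    proof -
      fix w assume w: "w \<in> S" "w \<in> Pos"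
      show "\<exists>t<L. w = s t"
      proof (rule ccontr)
        assume "\<not> (\<exists>t<L. w = s t)"
        then obtain t where "t < L" "w = f (s t)" using inS w(1) by blast
        then have "w \<in> Neg" using fNeg allP by simp
        then show False using w(2) PosNeg by blast
      qed
    qed
    have inSN: "\<And>w. w \<in> S \<Longrightarrow> w \<in> Neg \<Longrightarrow> \<exists>t<L. w = f (s t)"
    proof -
      fix w assume w: "w \<in> S" "w \<in> Neg"
      show "\<exists>t<L. w = f (s t)"
      proof (rule ccontr)
        assume "\<not> (\<exists>t<L. w = f (s t))"
        then obtain t where "t < L" "w = s t" using inS w(1) by blast
        then have "w \<in> Pos" using allP by simp
        then show False using w(2) PosNeg by blast
      qed
    qed
    have SPN: "S \<subseteq> Pos \<union> Neg" unfolding S_def using allP fNeg by auto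
    have SU: "S \<subseteq> U" using SPN Pos_def Neg_def by auto
    have cl0: "\<forall>(a,b)\<in>M0. a\<in>S \<longleftrightarrow> b\<in>S"
    proof (clarify)
      fix a b assume ab: "(a,b) \<in> M0"
      then have ab': "a \<in> Pos" "b = f a" using M0D by auto
      show "a \<in> S \<longleftrightarrow> b \<in> S"
      proof
        assume "a \<in> S"
        then obtain t where "t < L" "a = s t" using inSP ab' by blast
        then show "b \<in> S" using ab' S_def by auto
      next
        assume "b \<in> S"
        then obtain t where t: "t < L" "b = f (s t)" using inSN ab' fNeg by blast
        then have "a = s t" using finj ab' allP by metis
        then show "a \<in> S" using t S_def by auto
      qed
    qed
    have clG: "\<forall>(a,b)\<in>G. a\<in>S \<longleftrightarrow> b\<in>S"
    proof (clarify)
      fix a b assume ab: "(a,b) \<in> G"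
      then have ab': "a = gi b" "a \<in> Pos" "b \<in> Neg" using GD by auto
      show "a \<in> S \<longleftrightarrow> b \<in> S"
      proof
        assume "a \<in> S"
        then obtain t where t: "t < L" "a = s t" using inSP ab' by blast
        show "b \<in> S"
        proof (cases t)
          case 0
          have "L = Suc (L - 1)" using L by simp
          then have "(s L, f (s (L - 1))) \<in> G" using sucG allok by metis
          then have "(a, f (s (L - 1))) \<in> G" using t 0 s0 L by simp
          then have "b = f (s (L - 1))" using ab injG(1) by (metis fst_conv inj_onD snd_conv)
          then show ?thesis using S_def L by auto
        next
          case (Suc t')
          then have "(a, f (s t')) \<in> G" using sucG allok t by simp
          then have "b = f (s t')" using ab injG(1) by (metis fst_conv inj_onD snd_conv)
          then show ?thesis using S_def Suc t by auto
        qed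
      next
        assume "b \<in> S"
        then obtain t where t: "t < L" "b = f (s t)" using inSN ab' by blast
        then have a: "a = s (Suc t)" using ab' sS by simp
        show "a \<in> S"
        proof (cases "Suc t < L")
          case True then show ?thesis using a S_def by auto
        next
          case False
          then have "Suc t = L" using t by simp
          then have "a = s 0" using a L s0 by simp
          then show ?thesis using L S_def by auto
        qed
      qed
    qed
    have Z: "{w\<in>S. w \<notin> matched G} = {}"
    proof -
      have "\<And>w. w \<in> S \<Longrightarrow> w \<in> matched G"
      proof -
        fix w assume "w \<in> S"
        then have "w \<in> Pos \<or> w \<in> Neg" using SPN by blast
        then show "w \<in> matched G" using PosG NegG unfolding matched_def by blast
      qed
      then show ?thesis by blast
    qed
    have "v0 \<in> S" unfolding S_def using L s0 by (metis UnI1 image_eqI lessThan_iff)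
    then show ?thesis apply (intro exI[of _ S]) using SU cl0 clG Z by blast
  qed
qed

definition conf :: "(nat \<Rightarrow> int) \<Rightarrow> (nat \<Rightarrow> int) \<Rightarrow> nat set \<Rightarrow> bool" where
  "conf c d I \<longleftrightarrow> (0 \<le> (\<Sum>j\<in>I. d j) \<longrightarrow> 0 \<le> (\<Sum>j\<in>I. c j) \<and> (\<Sum>j\<in>I. c j) \<le> (\<Sum>j\<in>I. d j)) \<and>
                   ((\<Sum>j\<in>I. d j) \<le> 0 \<longrightarrow> (\<Sum>j\<in>I. d j) \<le> (\<Sum>j\<in>I. c j) \<and> (\<Sum>j\<in>I. c j) \<le> 0)"

definition Ud :: "nat \<Rightarrow> (nat \<Rightarrow> int) \<Rightarrow> (nat \<times> nat) set" where
  "Ud m d = Sigma {1..m} (\<lambda>j. {..< nat \<bar>d j\<bar>})"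

definition vec :: "(nat \<Rightarrow> int) \<Rightarrow> (nat \<times> nat) set \<Rightarrow> nat \<Rightarrow> int" where
  "vec d W j = (\<Sum>u\<in>{u\<in>W. fst u = j}. sgn (d (fst u)))"

definition psi :: "(nat \<Rightarrow> int) \<Rightarrow> nat set \<Rightarrow> nat \<times> nat \<Rightarrow> int" where
  "psi d K u = (if fst u \<in> K then sgn (d (fst u)) else 0)"

lemma finite_Ud: "finite (Ud m d)" unfolding Ud_def by auto

lemma vec_sum:
  assumes "W \<subseteq> Ud m d" "finite K"
  shows "(\<Sum>j\<in>K. vec d W j) = (\<Sum>u\<in>W. psi d K u)"
proof -
  have fW: "finite W" using assms(1) finite_Ud finite_subset by blast
  have "(\<Sum>u\<in>W. psi d K u) = (\<Sum>u\<in>{u\<in>W. fst u \<in> K}. sgn (d (fst u)))"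
    unfolding psi_def using fW by (simp add: sum.inter_filter)
  also have "\<dots> = (\<Sum>j\<in>K. (\<Sum>u\<in>{x. x \<in> {u\<in>W. fst u \<in> K} \<and> fst x = j}. sgn (d (fst u))))"
    by (rule sum.group[symmetric]) (use fW assms(2) in auto)
  also have "\<dots> = (\<Sum>j\<in>K. vec d W j)"
    unfolding vec_def
  proof (rule sum.cong[OF refl])
    fix j assume "j \<in> K"
    then have "{x. x \<in> {u\<in>W. fst u \<in> K} \<and> fst x = j} = {u\<in>W. fst u = j}" by auto
    then show "(\<Sum>u\<in>{x. x \<in> {u\<in>W. fst u \<in> K} \<and> fst x = j}. sgn (d (fst u))) =
               (\<Sum>u\<in>{u\<in>W. fst u = j}. sgn (d (fst u)))" by simp
  qed
  finally show ?thesis by simp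
qed

lemma vec_Ud: "j \<in> {1..m} \<Longrightarrow> vec d (Ud m d) j = d j"
proof -
  assume j: "j \<in> {1..m}"
  have "{u\<in>Ud m d. fst u = j} = {j} \<times> {..< nat \<bar>d j\<bar>}" unfolding Ud_def using j by auto
  then have "vec d (Ud m d) j = (\<Sum>u\<in>{j} \<times> {..< nat \<bar>d j\<bar>}. sgn (d (fst u)))" unfolding vec_def by simp
  also have "\<dots> = (\<Sum>u\<in>{j} \<times> {..< nat \<bar>d j\<bar>}. sgn (d j))" by (rule sum.cong) auto
  also have "\<dots> = sgn (d j) * int (nat \<bar>d j\<bar>)" by (simp add: card_cartesian_product)
  also have "\<dots> = d j"
    by (cases "d j > 0"; cases "d j = 0"; simp)
  finally show ?thesis .
qed

lemma vec_W:
  assumes "W \<subseteq> Ud m d"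
  shows "vec d W j = sgn (d j) * int (card {u\<in>W. fst u = j})"
  unfolding vec_def by simp

lemma blocks2:
  fixes \<psi> :: "'a \<Rightarrow> int"
  assumes "finite U" "S \<subseteq> U" "M \<subseteq> U \<times> U" "matching M" "fst ` M \<inter> snd ` M = {}"
    and cl: "\<forall>(a,b)\<in>M. a \<in> S \<longleftrightarrow> b \<in> S"
    and P0: "P 0" and Padd: "\<And>x y. P x \<Longrightarrow> P y \<Longrightarrow> P (x + y)"
    and Ppair: "\<And>a b. (a,b)\<in>M \<Longrightarrow> P (\<psi> a + \<psi> b)"
    and Punm: "\<And>w. w \<in> U \<Longrightarrow> w \<notin> matched M \<Longrightarrow> P (\<psi> w)"
  shows "P (\<Sum>w\<in>S. \<psi> w)" "P (\<Sum>w\<in>U-S. \<psi> w)"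
proof -
  show "P (\<Sum>w\<in>S. \<psi> w)"
    apply (rule blocks[OF finite_subset[OF assms(2,1)] assms(4,5) cl, where P=P])
    using P0 Padd Ppair Punm assms(2) by auto
  have cl2: "\<forall>(a,b)\<in>M. a \<in> U - S \<longleftrightarrow> b \<in> U - S" using cl assms(3) by blast
  show "P (\<Sum>w\<in>U-S. \<psi> w)"
    apply (rule blocks[OF finite_Diff[OF assms(1)] assms(4,5) cl2, where P=P])
    using P0 Padd Ppair Punm by auto
qed

lemma conf_arith:
  fixes a b D :: int
  assumes "D = a + b" "(D \<ge> 0 \<longrightarrow> a \<ge> 0) \<and> (D \<le> 0 \<longrightarrow> a \<le> 0)" "(D \<ge> 0 \<longrightarrow> b \<ge> 0) \<and> (D \<le> 0 \<longrightarrow> b \<le> 0)"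
  shows "(0 \<le> D \<longrightarrow> 0 \<le> a \<and> a \<le> D) \<and> (D \<le> 0 \<longrightarrow> D \<le> a \<and> a \<le> 0)"
  using assms by auto

locale amsg =
  fixes n m :: nat and k :: "nat \<Rightarrow> nat" and w :: "nat \<Rightarrow> real" and \<I> :: "nat set set"
    and l u :: "nat set \<Rightarrow> int" and T :: "nat \<Rightarrow> nat set set"
  assumes am: "assignment_message n m k w \<I> l u T" and n2: "n \<ge> 2"
begin

abbreviation "J \<equiv> {1..m}"
abbreviation "R i \<equiv> goods_var m k i"

lemma parts: "\<forall>j\<in>J. k j \<in> {1..n}" "\<forall>i\<in>{1..n}. R i \<noteq> {}" "\<forall>I\<in>\<I>. l I \<le> 0 \<and> 0 \<le> u I"
  "\<I> = (\<Union>i\<in>{0..n}. T i)" "\<forall>i\<in>{0..n}. is_tree (T i)"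
  "\<forall>i\<in>{1..n}. T i \<subseteq> Pow (R i) \<and> R i \<in> T i \<and> (\<forall>j\<in>R i. {j} \<in> T i)"
  "T 0 \<subseteq> Pow J" "J \<in> T 0" "\<forall>j\<in>J. {j} \<in> T 0"
  apply (insert am) apply (unfold assignment_message_def) apply (elim conjE, assumption)+ done

lemma kJ: "j \<in> J \<Longrightarrow> k j \<in> {1..n}" using parts(1) by blast
lemma R_iff: "j \<in> R i \<longleftrightarrow> j \<in> J \<and> k j = i" unfolding goods_var_def by auto
lemma Rsub: "R i \<subseteq> J" unfolding goods_var_def by auto
lemma Rdisj: "i \<noteq> i' \<Longrightarrow> R i \<inter> R i' = {}" unfolding goods_var_def by auto
lemma Rne: "i \<in> {1..n} \<Longrightarrow> R i \<noteq> {}" using parts(2) by blast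
lemma I_eq: "\<I> = (\<Union>i\<in>{0..n}. T i)" using parts(4) .
lemma Ttree: "i \<in> {0..n} \<Longrightarrow> is_tree (T i)" using parts(5) by blast
lemma Ti_sub: "i \<in> {1..n} \<Longrightarrow> T i \<subseteq> Pow (R i)" using parts(6) by blast
lemma Ri_in: "i \<in> {1..n} \<Longrightarrow> R i \<in> T i" using parts(6) by blast
lemma T0_sub: "T 0 \<subseteq> Pow J" using parts(7) .
lemma J_in: "J \<in> T 0" using parts(8) .
lemma sing_in: "j \<in> J \<Longrightarrow> {j} \<in> T 0" using parts(9) by blast
lemma bounds: "I \<in> \<I> \<Longrightarrow> l I \<le> 0 \<and> 0 \<le> u I" using parts(3) by blast

lemma I_cases: "I \<in> \<I> \<Longrightarrow> I \<in> T 0 \<or> (\<exists>i\<in>{1..n}. I \<in> T i)"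
proof -
  assume "I \<in> \<I>"
  then obtain i where i: "i \<in> {0..n}" "I \<in> T i" using I_eq by blast
  show ?thesis
  proof (cases "i = 0")
    case True then show ?thesis using i by simp
  next
    case False then have "i \<in> {1..n}" using i by simp
    then show ?thesis using i by blast
  qed
qed
lemma T0_I: "I \<in> T 0 \<Longrightarrow> I \<in> \<I>" using I_eq by force
lemma Ti_I: "i \<in> {1..n} \<Longrightarrow> I \<in> T i \<Longrightarrow> I \<in> \<I>" using I_eq by force
lemma I_sub: "I \<in> \<I> \<Longrightarrow> I \<subseteq> J" using I_cases T0_sub Ti_sub Rsub by blast
lemma lam: "i \<in> {0..n} \<Longrightarrow> laminar (T i)" using Ttree unfolding is_tree_def laminar_def by blast
lemma finT: "i \<in> {0..n} \<Longrightarrow> finite (T i)"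
proof -
  assume i: "i \<in> {0..n}"
  have "T i \<subseteq> Pow J"
  proof (cases "i = 0")
    case True then show ?thesis using T0_sub by simp
  next
    case False then show ?thesis using Ti_sub[of i] i Rsub by auto
  qed
  then show ?thesis by (rule finite_subset) simp
qed
lemma finK: "i \<in> {0..n} \<Longrightarrow> K \<in> T i \<Longrightarrow> finite K"
proof -
  assume i: "i \<in> {0..n}" "K \<in> T i"
  have "K \<subseteq> J"
  proof (cases "i = 0")
    case True then show ?thesis using T0_sub i by auto
  next
    case False then show ?thesis using Ti_sub[of i] i Rsub by auto
  qed
  then show ?thesis by (rule finite_subset) simp
qed


lemma elem:
  fixes d :: "nat \<Rightarrow> int"
  assumes dJ: "(\<Sum>j\<in>J. d j) = 0" and nz: "\<exists>j\<in>J. d j \<noteq> 0"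
  shows "\<exists>c. (\<forall>I\<in>\<I>. conf c d I) \<and> (\<exists>j\<in>J. c j \<noteq> 0) \<and>
     (\<exists>i\<in>{1..n}. \<exists>j\<in>{1..n}. \<forall>t\<in>{1..n}. (\<Sum>x\<in>R t. c x) = unit_vec j t - unit_vec i t)"
proof -
  let ?U = "Ud m d"
  let ?sg = "\<lambda>u::nat\<times>nat. sgn (d (fst u))"
  have Ufst: "\<And>v. v \<in> ?U \<Longrightarrow> fst v \<in> J \<and> d (fst v) \<noteq> 0" unfolding Ud_def by auto
  have sgU: "\<And>v. v \<in> ?U \<Longrightarrow> ?sg v = 1 \<or> ?sg v = -1"
  proof -
    fix v assume "v \<in> ?U"
    then have "d (fst v) \<noteq> 0" using Ufst by blast
    then show "?sg v = 1 \<or> ?sg v = -1" by (cases "d (fst v) > 0") auto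
  qed
  interpret U: units ?U fst ?sg
    by unfold_locales (use finite_Ud sgU in auto)
  have UXJ: "U.UX J = ?U" unfolding U.UX_def using Ufst by auto
  have UXsub: "\<And>X. U.UX X \<subseteq> ?U" unfolding U.UX_def by auto
  have psum: "\<And>K. K \<subseteq> J \<Longrightarrow> (\<Sum>j\<in>K. d j) = (\<Sum>v\<in>?U. psi d K v)"
  proof -
    fix K assume K: "K \<subseteq> J"
    then have fK: "finite K" using finite_subset by blast
    have "(\<Sum>j\<in>K. d j) = (\<Sum>j\<in>K. vec d ?U j)" using vec_Ud K by (intro sum.cong) auto
    also have "\<dots> = (\<Sum>v\<in>?U. psi d K v)" by (rule vec_sum[OF subset_refl fK])
    finally show "(\<Sum>j\<in>K. d j) = (\<Sum>v\<in>?U. psi d K v)" .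
  qed
  have DDeq: "\<And>K. K \<subseteq> J \<Longrightarrow> U.DD K = (\<Sum>j\<in>K. d j)"
  proof -
    fix K assume K: "K \<subseteq> J"
    have "U.DD K = (\<Sum>v\<in>?U. psi d K v)" unfolding U.DD_def psi_def
      using finite_Ud by (simp add: sum.inter_filter)
    then show "U.DD K = (\<Sum>j\<in>K. d j)" using psum K by simp
  qed
  have T0props: "finite (T 0)" "\<forall>K\<in>T 0. finite K" "laminar (T 0)"
    using finT finK lam by auto
  obtain M0 where M0: "U.good (T 0) J M0" using U.tree_match[OF T0props J_in] by blast
  have M0U: "M0 \<subseteq> ?U \<times> ?U" using U.goodD(1)[OF M0] UXJ by simp
  have M0sg: "\<forall>(a,b)\<in>M0. ?sg a = 1 \<and> ?sg b = -1" using U.goodD(2)[OF M0] by blast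
  have M0m: "matching M0" using U.goodD(3)[OF M0] .
  have perf: "\<forall>v\<in>?U. v \<in> matched M0"
  proof (rule ccontr)
    assume "\<not> (\<forall>v\<in>?U. v \<in> matched M0)"
    then obtain v where v: "v \<in> ?U" "v \<notin> matched M0" by blast
    have "?sg v * U.DD J > 0" apply (rule U.goodD(6)[OF M0 _ v(2) J_in subset_refl])
      using v UXJ Ufst by auto
    moreover have "U.DD J = 0" using DDeq dJ by simp
    ultimately show False by simp
  qed
  have "\<forall>i\<in>{1..n}. \<exists>M. U.good (T i) (R i) M"
  proof
    fix i assume i: "i \<in> {1..n}"
    then have i0: "i \<in> {0..n}" by simp
    show "\<exists>M. U.good (T i) (R i) M"
      using U.tree_match[OF finT[OF i0] ballI[OF finK[OF i0]] lam[OF i0] Ri_in[OF i]] by blast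
  qed
  then obtain Mf where Mf: "\<And>i. i \<in> {1..n} \<Longrightarrow> U.good (T i) (R i) (Mf i)"
    using bchoice[of "{1..n}" "\<lambda>i M. U.good (T i) (R i) M"] by blast
  define G where "G = (\<Union>i\<in>{1..n}. Mf i)"
  have MfUX: "\<And>i. i \<in> {1..n} \<Longrightarrow> Mf i \<subseteq> U.UX (R i) \<times> U.UX (R i)" using U.goodD(1)[OF Mf] by blast
  have GU: "G \<subseteq> ?U \<times> ?U" unfolding G_def using MfUX UXsub by blast
  have Gsg: "\<forall>(a,b)\<in>G. ?sg a = 1 \<and> ?sg b = -1" unfolding G_def using U.goodD(2)[OF Mf] by blast
  have Gm: "matching G" unfolding G_def
  proof (rule U.matching_UN)
    show "\<forall>i\<in>{1..n}. matching (Mf i)" using U.goodD(3)[OF Mf] by blast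
    show "\<forall>i\<in>{1..n}. \<forall>i'\<in>{1..n}. i \<noteq> i' \<longrightarrow> matched (Mf i) \<inter> matched (Mf i') = {}"
    proof (intro ballI impI)
      fix i i' assume ii: "i \<in> {1..n}" "i' \<in> {1..n}" "i \<noteq> i'"
      have "matched (Mf i) \<subseteq> U.UX (R i)" "matched (Mf i') \<subseteq> U.UX (R i')"
        using MfUX ii unfolding matched_def by force+
      moreover have "U.UX (R i) \<inter> U.UX (R i') = {}" using Rdisj[OF ii(3)] unfolding U.UX_def by blast
      ultimately show "matched (Mf i) \<inter> matched (Mf i') = {}" by blast
    qed
  qed
  obtain j0 where j0: "j0 \<in> J" "d j0 > 0"
  proof (rule ccontr)
    assume "\<not> thesis"
    then have np: "\<forall>j\<in>J. d j \<le> 0" using that by force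
    have "(\<Sum>j\<in>J. - d j) = 0" using dJ by (simp add: sum_negf)
    then have "\<forall>j\<in>J. - d j = 0" using np sum_nonneg_eq_0_iff[of J "\<lambda>j. - d j"] by simp
    then show False using nz by simp
  qed
  have u0: "(j0, 0) \<in> ?U" "?sg (j0, 0) = 1" unfolding Ud_def using j0 by auto
  have sgU': "\<forall>u\<in>?U. ?sg u = 1 \<or> ?sg u = -1" using sgU by blast
  obtain S where S: "S \<subseteq> ?U" "S \<noteq> {}" "\<forall>(a,b)\<in>M0. a\<in>S \<longleftrightarrow> b\<in>S" "\<forall>(a,b)\<in>G. a\<in>S \<longleftrightarrow> b\<in>S"
     "{v\<in>S. v \<notin> matched G} = {} \<or> (\<exists>a b. {v\<in>S. v \<notin> matched G} = {a,b} \<and> ?sg a = 1 \<and> ?sg b = -1)"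
    using walk[OF finite_Ud sgU' M0U M0sg M0m perf GU Gsg Gm u0] by (elim exE conjE) (rule that; assumption)
  define c where "c = vec d S"
  have csum: "\<And>K. K \<subseteq> J \<Longrightarrow> (\<Sum>j\<in>K. c j) = (\<Sum>v\<in>S. psi d K v)"
  proof -
    fix K assume "K \<subseteq> J"
    then have "finite K" by (rule finite_subset) simp
    then show "(\<Sum>j\<in>K. c j) = (\<Sum>v\<in>S. psi d K v)" unfolding c_def by (rule vec_sum[OF S(1)])
  qed
  have dsplit: "\<And>K. K \<subseteq> J \<Longrightarrow> (\<Sum>j\<in>K. d j) = (\<Sum>v\<in>S. psi d K v) + (\<Sum>v\<in>?U-S. psi d K v)"
    using psum sum.subset_diff[OF S(1) finite_Ud] by (simp add: add.commute)
  have disjM0: "fst ` M0 \<inter> snd ` M0 = {}"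
  proof (rule ccontr)
    assume "fst ` M0 \<inter> snd ` M0 \<noteq> {}"
    then obtain p p' where "p \<in> M0" "p' \<in> M0" "fst p = snd p'" by blast
    then show False using M0sg by (metis (mono_tags, lifting) case_prod_beta one_neq_neg_one)
  qed
  have disjG: "fst ` G \<inter> snd ` G = {}"
  proof (rule ccontr)
    assume "fst ` G \<inter> snd ` G \<noteq> {}"
    then obtain p p' where "p \<in> G" "p' \<in> G" "fst p = snd p'" by blast
    then show False using Gsg by (metis (mono_tags, lifting) case_prod_beta one_neq_neg_one)
  qed
  have pair_sign: "\<And>a b K. ?sg a = 1 \<Longrightarrow> ?sg b = -1 \<Longrightarrow>
      (fst a \<in> K \<and> fst b \<notin> K \<longrightarrow> U.DD K > 0) \<Longrightarrow> (fst b \<in> K \<and> fst a \<notin> K \<longrightarrow> U.DD K < 0) \<Longrightarrow>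
      (U.DD K \<ge> 0 \<longrightarrow> psi d K a + psi d K b \<ge> 0) \<and> (U.DD K \<le> 0 \<longrightarrow> psi d K a + psi d K b \<le> 0)"
    unfolding psi_def by auto
  have conf_all: "\<forall>I\<in>\<I>. conf c d I"
  proof
    fix I assume I: "I \<in> \<I>"
    have IJ: "I \<subseteq> J" using I_sub[OF I] .
    define P where "P z \<longleftrightarrow> (U.DD I \<ge> 0 \<longrightarrow> z \<ge> 0) \<and> (U.DD I \<le> 0 \<longrightarrow> z \<le> 0)" for z :: int
    have P0: "P 0" and Padd: "\<And>x y. P x \<Longrightarrow> P y \<Longrightarrow> P (x + y)" unfolding P_def by auto
    have PP: "P (\<Sum>v\<in>S. psi d I v) \<and> P (\<Sum>v\<in>?U-S. psi d I v)"
    proof (cases "I \<in> T 0")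
      case True
      show ?thesis
      proof (rule conjI; rule blocks2[OF finite_Ud S(1) M0U M0m disjM0 S(3), where P=P and \<psi>="psi d I", OF P0 Padd])
        fix a b assume ab: "(a,b) \<in> M0"
        have "?sg a = 1" "?sg b = -1" using ab M0sg by auto
        then show "P (psi d I a + psi d I b)" unfolding P_def
          using pair_sign[of a b I] U.goodD(4,5)[OF M0 ab True IJ] by blast
      next
        fix a b assume ab: "(a,b) \<in> M0"
        have "?sg a = 1" "?sg b = -1" using ab M0sg by auto
        then show "P (psi d I a + psi d I b)" unfolding P_def
          using pair_sign[of a b I] U.goodD(4,5)[OF M0 ab True IJ] by blast
      qed (use perf in blast)+
    next
      case False
      then obtain i where i: "i \<in> {1..n}" "I \<in> T i" using I_cases[OF I] by blast
      have IR: "I \<subseteq> R i" using Ti_sub[OF i(1)] i(2) by blast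
      have Ppair: "\<And>a b. (a,b) \<in> G \<Longrightarrow> P (psi d I a + psi d I b)"
      proof -
        fix a b assume ab: "(a,b) \<in> G"
        then obtain i' where i': "i' \<in> {1..n}" "(a,b) \<in> Mf i'" unfolding G_def by blast
        have sgab: "?sg a = 1" "?sg b = -1" using ab Gsg by auto
        show "P (psi d I a + psi d I b)"
        proof (cases "i' = i")
          case True
          then show ?thesis unfolding P_def
            using pair_sign[OF sgab] U.goodD(4,5)[OF Mf[OF i'(1)] i'(2)] i IR by blast
        next
          case False
          have "fst a \<in> R i'" "fst b \<in> R i'" using MfUX[OF i'(1)] i'(2) unfolding U.UX_def by auto
          then have "fst a \<notin> I" "fst b \<notin> I" using Rdisj[OF False] IR by blast+
          then show ?thesis unfolding P_def psi_def by simp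
        qed
      qed
      have Punm: "\<And>v. v \<in> ?U \<Longrightarrow> v \<notin> matched G \<Longrightarrow> P (psi d I v)"
      proof -
        fix v assume v: "v \<in> ?U" "v \<notin> matched G"
        show "P (psi d I v)"
        proof (cases "fst v \<in> I")
          case True
          have vUX: "v \<in> U.UX (R i)" using v True IR unfolding U.UX_def by blast
          have "v \<notin> matched (Mf i)" using v(2) i(1) unfolding G_def matched_def by blast
          then have "?sg v * U.DD I > 0" using U.goodD(6)[OF Mf[OF i(1)] vUX _ i(2) IR True] by blast
          moreover have "?sg v = 1 \<or> ?sg v = -1" using sgU v by blast
          ultimately show ?thesis unfolding P_def psi_def using True by auto
        next
          case False then show ?thesis unfolding P_def psi_def by simp
        qed
      qed
      show ?thesis
        using blocks2[OF finite_Ud S(1) GU Gm disjG S(4), where P=P and \<psi>="psi d I", OF P0 Padd Ppair Punm] by blast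
    qed
    have "U.DD I = (\<Sum>v\<in>S. psi d I v) + (\<Sum>v\<in>?U-S. psi d I v)" using DDeq[OF IJ] dsplit[OF IJ] by simp
    then have "(0 \<le> U.DD I \<longrightarrow> 0 \<le> (\<Sum>v\<in>S. psi d I v) \<and> (\<Sum>v\<in>S. psi d I v) \<le> U.DD I) \<and>
               (U.DD I \<le> 0 \<longrightarrow> U.DD I \<le> (\<Sum>v\<in>S. psi d I v) \<and> (\<Sum>v\<in>S. psi d I v) \<le> 0)"
      by (rule conf_arith) (use PP P_def in auto)
    then show "conf c d I" unfolding conf_def using csum[OF IJ] DDeq[OF IJ] by simp
  qed
  have nonzero: "\<exists>j\<in>J. c j \<noteq> 0"
  proof -
    obtain v where v: "v \<in> S" using S(2) by blast
    then have vU: "v \<in> ?U" using S(1) by blast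
    have fS: "finite S" using S(1) finite_Ud finite_subset by blast
    have "v \<in> {v'\<in>S. fst v' = fst v}" using v by simp
    then have "card {v'\<in>S. fst v' = fst v} > 0" using fS by (metis (no_types, lifting) card_gt_0_iff empty_iff finite_subset mem_Collect_eq subsetI)
    moreover have "c (fst v) = sgn (d (fst v)) * int (card {v'\<in>S. fst v' = fst v})"
      unfolding c_def using vec_W[OF S(1)] by blast
    moreover have "d (fst v) \<noteq> 0" "fst v \<in> J" using Ufst vU by auto
    ultimately show ?thesis by (metis mult_eq_0_iff of_nat_0_less_iff sgn_0_0 less_irrefl)
  qed
  define Z where "Z = {v\<in>S. v \<notin> matched G}"
  have qsum: "\<And>t. t \<in> {1..n} \<Longrightarrow> (\<Sum>x\<in>R t. c x) = (\<Sum>v\<in>Z. psi d (R t) v)"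
  proof -
    fix t assume t: "t \<in> {1..n}"
    have fS: "finite S" using S(1) finite_Ud finite_subset by blast
    have ZS: "Z \<subseteq> S" unfolding Z_def by blast
    have "(\<Sum>x\<in>R t. c x) = (\<Sum>v\<in>S. psi d (R t) v)" using csum Rsub by blast
    also have "\<dots> = (\<Sum>v\<in>Z. psi d (R t) v) + (\<Sum>v\<in>S-Z. psi d (R t) v)"
      using sum.subset_diff[OF ZS fS] by (simp add: add.commute)
    also have "(\<Sum>v\<in>S-Z. psi d (R t) v) = 0"
    proof -
      have cl: "\<forall>(a,b)\<in>G. a \<in> S - Z \<longleftrightarrow> b \<in> S - Z"
      proof (clarify)
        fix a b assume ab: "(a,b) \<in> G"
        then have "a \<in> matched G" "b \<in> matched G" unfolding matched_def by (force intro: rev_image_eqI)+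
        then show "a \<in> S - Z \<longleftrightarrow> b \<in> S - Z" using S(4) ab unfolding Z_def by blast
      qed
      show ?thesis
      proof (rule blocks[OF finite_Diff[OF fS] Gm disjG cl, where P="\<lambda>z. z = 0"])
        fix a b assume ab: "(a,b) \<in> G"
        then obtain i' where i': "i' \<in> {1..n}" "(a,b) \<in> Mf i'" unfolding G_def by blast
        have sgab: "?sg a = 1" "?sg b = -1" using ab Gsg by auto
        have "fst a \<in> R i'" "fst b \<in> R i'" using MfUX[OF i'(1)] i'(2) unfolding U.UX_def by auto
        then have "fst a \<in> R t \<longleftrightarrow> fst b \<in> R t" using R_iff by auto
        then show "psi d (R t) a + psi d (R t) b = 0" unfolding psi_def using sgab by auto
      qed (auto simp: Z_def)
    qed
    finally show "(\<Sum>x\<in>R t. c x) = (\<Sum>v\<in>Z. psi d (R t) v)" by simp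
  qed
  have qform: "\<exists>i\<in>{1..n}. \<exists>j\<in>{1..n}. \<forall>t\<in>{1..n}. (\<Sum>x\<in>R t. c x) = unit_vec j t - unit_vec i t"
  proof (cases "Z = {}")
    case True
    have "1 \<in> {1..n}" using n2 by simp
    then show ?thesis using qsum True unfolding unit_vec_def by fastforce
  next
    case False
    then obtain a b where ab: "Z = {a,b}" "?sg a = 1" "?sg b = -1" using S(5) unfolding Z_def by blast
    have abU: "a \<in> ?U" "b \<in> ?U" using ab S(1) unfolding Z_def by auto
    have neq: "a \<noteq> b" using ab by auto
    have ki: "k (fst a) \<in> {1..n}" "k (fst b) \<in> {1..n}" using kJ Ufst abU by auto
    have "\<forall>t\<in>{1..n}. (\<Sum>x\<in>R t. c x) = unit_vec (k (fst a)) t - unit_vec (k (fst b)) t"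
    proof
      fix t assume t: "t \<in> {1..n}"
      have "(\<Sum>x\<in>R t. c x) = psi d (R t) a + psi d (R t) b" using qsum[OF t] ab(1) neq by simp
      also have "\<dots> = unit_vec (k (fst a)) t - unit_vec (k (fst b)) t"
        unfolding psi_def unit_vec_def using R_iff Ufst abU ab(2,3) by auto
      finally show "(\<Sum>x\<in>R t. c x) = unit_vec (k (fst a)) t - unit_vec (k (fst b)) t" .
    qed
    then show ?thesis using ki by blast
  qed
  show ?thesis using conf_all nonzero qform by blast
qed

end

lemma sum_list_swap:
  fixes cs :: "(nat \<Rightarrow> int) list"
  shows "(\<Sum>x\<in>A. (\<Sum>c\<leftarrow>cs. c x)) = (\<Sum>c\<leftarrow>cs. (\<Sum>x\<in>A. c x))"
  by (induction cs) (auto simp: sum.distrib)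

lemma sum_list_neg_count:
  fixes g :: "'a \<Rightarrow> int"
  assumes "\<forall>c\<in>set cs. g c = -1 \<or> g c = 0"
  shows "(\<Sum>c\<leftarrow>cs. g c) = - int (length (filter (\<lambda>c. g c = -1) cs))"
  using assms by (induction cs) auto

lemma sum_list_pos_count:
  fixes g :: "'a \<Rightarrow> int"
  assumes "\<forall>c\<in>set cs. g c = 1 \<or> g c = 0"
  shows "(\<Sum>c\<leftarrow>cs. g c) = int (length (filter (\<lambda>c. g c = 1) cs))"
  using assms by (induction cs) auto

context amsg
begin

lemma conf_trans:
  assumes "conf c d I" "conf c' (\<lambda>j. d j - c j) I"
  shows "conf c' d I"
  using assms unfolding conf_def by (simp add: sum_subtractf) linarith

lemma decomp:
  fixes d :: "nat \<Rightarrow> int"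
  assumes "(\<Sum>j\<in>J. d j) = 0"
  shows "\<exists>cs. (\<forall>j\<in>J. d j = (\<Sum>c\<leftarrow>cs. c j)) \<and> (\<forall>c\<in>set cs. (\<forall>I\<in>\<I>. conf c d I) \<and>
           (\<exists>i\<in>{1..n}. \<exists>j\<in>{1..n}. \<forall>t\<in>{1..n}. (\<Sum>x\<in>R t. c x) = unit_vec j t - unit_vec i t))"
  using assms
proof (induction "\<Sum>j\<in>J. nat \<bar>d j\<bar>" arbitrary: d rule: less_induct)
  case less
  show ?case
  proof (cases "\<forall>j\<in>J. d j = 0")
    case True
    then show ?thesis by (intro exI[of _ "[]"]) simp
  next
    case False
    then have nz: "\<exists>j\<in>J. d j \<noteq> 0" by blast
    obtain c where c: "\<forall>I\<in>\<I>. conf c d I" "\<exists>j\<in>J. c j \<noteq> 0"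
      "\<exists>i\<in>{1..n}. \<exists>j\<in>{1..n}. \<forall>t\<in>{1..n}. (\<Sum>x\<in>R t. c x) = unit_vec j t - unit_vec i t"
      using elem[OF less.prems nz] by blast
    define d' where "d' = (\<lambda>j. d j - c j)"
    have JI: "J \<in> \<I>" using T0_I J_in by blast
    have "(\<Sum>j\<in>J. c j) = 0" using c(1) JI less.prems unfolding conf_def by force
    then have d'J: "(\<Sum>j\<in>J. d' j) = 0" unfolding d'_def using less.prems by (simp add: sum_subtractf)
    have single: "\<And>j. j \<in> J \<Longrightarrow> conf c d {j}" using c(1) sing_in T0_I by blast
    have le: "\<And>j. j \<in> J \<Longrightarrow> nat \<bar>d' j\<bar> \<le> nat \<bar>d j\<bar>"
      using single unfolding conf_def d'_def by fastforce
    obtain j1 where j1: "j1 \<in> J" "c j1 \<noteq> 0" using c(2) by blast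
    have lt: "nat \<bar>d' j1\<bar> < nat \<bar>d j1\<bar>" using single[OF j1(1)] j1(2) unfolding conf_def d'_def by auto
    have "(\<Sum>j\<in>J. nat \<bar>d' j\<bar>) < (\<Sum>j\<in>J. nat \<bar>d j\<bar>)"
      by (rule sum_strict_mono_ex1) (use le j1 lt in auto)
    then obtain cs where cs: "\<forall>j\<in>J. d' j = (\<Sum>c\<leftarrow>cs. c j)" "\<forall>c'\<in>set cs. (\<forall>I\<in>\<I>. conf c' d' I) \<and>
           (\<exists>i\<in>{1..n}. \<exists>j\<in>{1..n}. \<forall>t\<in>{1..n}. (\<Sum>x\<in>R t. c' x) = unit_vec j t - unit_vec i t)"
      using less.hyps[OF _ d'J] by blast
    show ?thesis
    proof (rule exI[of _ "c # cs"], rule conjI; intro ballI)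
      fix j assume "j \<in> J"
      then have "d j - c j = (\<Sum>c\<leftarrow>cs. c j)" using cs(1) unfolding d'_def by blast
      then show "d j = (\<Sum>c\<leftarrow>c # cs. c j)" by simp
    next
      fix c' assume c': "c' \<in> set (c # cs)"
      show "(\<forall>I\<in>\<I>. conf c' d I) \<and>
           (\<exists>i\<in>{1..n}. \<exists>j\<in>{1..n}. \<forall>t\<in>{1..n}. (\<Sum>x\<in>R t. c' x) = unit_vec j t - unit_vec i t)"
      proof (cases "c' = c")
        case True then show ?thesis using c by blast
      next
        case False
        then have c'cs: "c' \<in> set cs" using c' by simp
        have "\<forall>I\<in>\<I>. conf c' d I" using conf_trans c(1) cs(2) c'cs unfolding d'_def by blast
        then show ?thesis using cs(2) c'cs by blast
      qed
    qed
  qed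
qed

end

context amsg
begin

definition feas :: "(nat \<Rightarrow> int) \<Rightarrow> bool" where
  "feas x \<longleftrightarrow> (\<forall>I\<in>\<I>. l I \<le> (\<Sum>j\<in>I. x j) \<and> (\<Sum>j\<in>I. x j) \<le> u I)"

definition qv :: "(nat \<Rightarrow> int) \<Rightarrow> nat \<Rightarrow> int" where
  "qv x = (\<lambda>i. if i \<in> {1..n} then (\<Sum>j\<in>R i. x j) else 0)"

definition val :: "(nat \<Rightarrow> int) \<Rightarrow> real" where
  "val x = (\<Sum>j\<in>J. w j * real_of_int (x j))"

definition Phi :: "(nat \<Rightarrow> real) \<Rightarrow> (nat \<Rightarrow> int) \<Rightarrow> real" where
  "Phi p x = val x - price_pair n p (qv x)"

abbreviation "QQ \<equiv> am_bundles n m k \<I> l u"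
abbreviation "VV \<equiv> am_valuation n m k w \<I> l u"

lemma amf_iff: "am_feasible n m k \<I> l u x q \<longleftrightarrow> feas x \<and> (\<forall>i\<in>{1..n}. (\<Sum>j\<in>R i. x j) = q i)"
  unfolding am_feasible_def feas_def by simp

lemma feas_bound: "feas x \<Longrightarrow> j \<in> J \<Longrightarrow> l {j} \<le> x j \<and> x j \<le> u {j}"
  unfolding feas_def using sing_in T0_I by fastforce

lemma vals_finite: "finite {(\<Sum>j\<in>J. w j * real_of_int (x j)) | x. am_feasible n m k \<I> l u x q}"
proof -
  let ?B = "PiE J (\<lambda>j. {l {j}..u {j}})"
  have fB: "finite ?B" by (rule finite_PiE) auto
  have "{(\<Sum>j\<in>J. w j * real_of_int (x j)) | x. am_feasible n m k \<I> l u x q} \<subseteq>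
        (\<lambda>x. \<Sum>j\<in>J. w j * real_of_int (x j)) ` ?B"
  proof
    fix z assume "z \<in> {(\<Sum>j\<in>J. w j * real_of_int (x j)) | x. am_feasible n m k \<I> l u x q}"
    then obtain x where x: "z = (\<Sum>j\<in>J. w j * real_of_int (x j))" "am_feasible n m k \<I> l u x q" by blast
    have "feas x" using x(2) amf_iff by blast
    then have rB: "restrict x J \<in> ?B" using feas_bound unfolding PiE_iff by auto
    have "(\<Sum>j\<in>J. w j * real_of_int (restrict x J j)) = (\<Sum>j\<in>J. w j * real_of_int (x j))"
      by (rule sum.cong) auto
    then have "z = (\<lambda>x. \<Sum>j\<in>J. w j * real_of_int (x j)) (restrict x J)" using x(1) by simp
    then show "z \<in> (\<lambda>x. \<Sum>j\<in>J. w j * real_of_int (x j)) ` ?B" using rB by (rule image_eqI)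
  qed
  then show ?thesis by (rule finite_subset[OF _ finite_imageI[OF fB]])
qed

lemma V_ge: "am_feasible n m k \<I> l u x q \<Longrightarrow> val x \<le> VV q"
  unfolding am_valuation_def val_def by (rule Max_ge[OF vals_finite]) blast

lemma V_attained: "q \<in> QQ \<Longrightarrow> \<exists>x. am_feasible n m k \<I> l u x q \<and> val x = VV q"
proof -
  assume "q \<in> QQ"
  then obtain x0 where "am_feasible n m k \<I> l u x0 q" unfolding am_bundles_def by blast
  then have ne: "{(\<Sum>j\<in>J. w j * real_of_int (x j)) | x. am_feasible n m k \<I> l u x q} \<noteq> {}" by blast
  have "VV q \<in> {(\<Sum>j\<in>J. w j * real_of_int (x j)) | x. am_feasible n m k \<I> l u x q}"
    unfolding am_valuation_def by (rule Max_in[OF vals_finite ne])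
  then show ?thesis unfolding val_def by auto
qed

lemma pp_eq: "(\<forall>i\<in>{1..n}. q i = q' i) \<Longrightarrow> price_pair n p q = price_pair n p q'"
  unfolding price_pair_def by simp

lemma qv_Q: "feas x \<Longrightarrow> qv x \<in> QQ \<and> am_feasible n m k \<I> l u x (qv x)"
  unfolding am_bundles_def amf_iff qv_def by auto

lemma val_add: "val (\<lambda>j. x j + c j) = val x + val c"
  unfolding val_def by (simp add: sum.distrib distrib_left)
lemma val_sub: "val (\<lambda>j. x j - c j) = val x - val c"
  unfolding val_def by (simp add: sum_subtractf right_diff_distrib)
lemma pp_add: "price_pair n p (qv (\<lambda>j. x j + c j)) = price_pair n p (qv x) + price_pair n p (qv c)"
  unfolding price_pair_def qv_def by (simp add: sum.distrib distrib_left)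
lemma pp_sub: "price_pair n p (qv (\<lambda>j. x j - c j)) = price_pair n p (qv x) - price_pair n p (qv c)"
  unfolding price_pair_def qv_def by (simp add: sum_subtractf right_diff_distrib)
lemma Phi_add: "Phi p (\<lambda>j. x j + c j) = Phi p x + Phi p c"
  unfolding Phi_def using val_add pp_add by simp
lemma Phi_sub: "Phi p (\<lambda>j. x j - c j) = Phi p x - Phi p c"
  unfolding Phi_def using val_sub pp_sub by simp

lemma sumJ: "(\<Sum>j\<in>J. x j) = (\<Sum>i\<in>{1..n}. (\<Sum>j\<in>R i. x j))"
proof -
  have "(\<Sum>i\<in>{1..n}. (\<Sum>j\<in>{j. j \<in> J \<and> k j = i}. x j)) = (\<Sum>j\<in>J. x j)"
    by (rule sum.group) (use kJ in auto)
  moreover have "\<And>i. {j. j \<in> J \<and> k j = i} = R i" using R_iff by auto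
  ultimately show ?thesis by simp
qed


lemma main:
  "\<forall>p :: nat \<Rightarrow> real. \<forall>q\<in>demand n QQ VV p. \<forall>r\<in>demand n QQ VV p.
           bsize n q = Min (bsize n ` demand n QQ VV p) \<and> bsize n r = Min (bsize n ` demand n QQ VV p) \<longrightarrow>
           (\<exists>\<sigma>. \<sigma> \<subseteq> supp_pos n q r \<times> supp_pos n r q \<and>
              (\<forall>(i, j)\<in>\<sigma>. (\<lambda>t. q t - unit_vec i t + unit_vec j t) \<in> demand n QQ VV p \<and>
                           (\<lambda>t. r t + unit_vec i t - unit_vec j t) \<in> demand n QQ VV p) \<and>
              (\<forall>i\<in>supp_pos n q r. 1 \<le> card {j'. (i, j') \<in> \<sigma>} \<and>
                                   int (card {j'. (i, j') \<in> \<sigma>}) \<le> q i - r i) \<and>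
              (\<forall>j\<in>supp_pos n r q. 1 \<le> card {i'. (i', j) \<in> \<sigma>} \<and>
                                   int (card {i'. (i', j) \<in> \<sigma>}) \<le> r j - q j))"
proof (intro allI ballI impI)
  fix p :: "nat \<Rightarrow> real" and q r
  let ?D = "demand n QQ VV p"
  let ?pp = "price_pair n p"
  assume qD: "q \<in> ?D" and rD: "r \<in> ?D"
    and sz: "bsize n q = Min (bsize n ` ?D) \<and> bsize n r = Min (bsize n ` ?D)"
  have Dprop: "\<And>q0. q0 \<in> ?D \<Longrightarrow> q0 \<in> QQ \<and> (\<forall>q'\<in>QQ. VV q' - ?pp q' \<le> VV q0 - ?pp q0)"
    unfolding demand_def by blast
  have opt: "\<And>x0 q0 z. q0 \<in> ?D \<Longrightarrow> am_feasible n m k \<I> l u x0 q0 \<Longrightarrow> val x0 = VV q0 \<Longrightarrow> feas z \<Longrightarrow>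
      Phi p z \<le> Phi p x0"
  proof -
    fix x0 q0 z assume a: "q0 \<in> ?D" "am_feasible n m k \<I> l u x0 q0" "val x0 = VV q0" "feas z"
    have z: "qv z \<in> QQ" "am_feasible n m k \<I> l u z (qv z)" using qv_Q[OF a(4)] by auto
    have "Phi p z = val z - ?pp (qv z)" unfolding Phi_def by simp
    also have "\<dots> \<le> VV (qv z) - ?pp (qv z)" using V_ge[OF z(2)] by simp
    also have "\<dots> \<le> VV q0 - ?pp q0" using Dprop[OF a(1)] z(1) by blast
    also have "?pp q0 = ?pp (qv x0)" apply (rule pp_eq) using a(2) unfolding amf_iff qv_def by simp
    finally show "Phi p z \<le> Phi p x0" unfolding Phi_def using a(3) by simp
  qed
  have bk: "\<And>x0 q0 z. q0 \<in> ?D \<Longrightarrow> am_feasible n m k \<I> l u x0 q0 \<Longrightarrow> val x0 = VV q0 \<Longrightarrow> feas z \<Longrightarrow>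
      Phi p x0 \<le> Phi p z \<Longrightarrow> qv z \<in> ?D"
  proof -
    fix x0 q0 z assume a: "q0 \<in> ?D" "am_feasible n m k \<I> l u x0 q0" "val x0 = VV q0" "feas z"
      "Phi p x0 \<le> Phi p z"
    have z: "qv z \<in> QQ" "am_feasible n m k \<I> l u z (qv z)" using qv_Q[OF a(4)] by auto
    have "\<forall>q'\<in>QQ. VV q' - ?pp q' \<le> VV (qv z) - ?pp (qv z)"
    proof
      fix q' assume q': "q' \<in> QQ"
      obtain x' where x': "am_feasible n m k \<I> l u x' q'" "val x' = VV q'" using V_attained[OF q'] by blast
      have fx': "feas x'" using x'(1) amf_iff by blast
      have "?pp q' = ?pp (qv x')" apply (rule pp_eq) using x'(1) unfolding amf_iff qv_def by simp
      then have "VV q' - ?pp q' = Phi p x'" unfolding Phi_def using x'(2) by simp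
      also have "\<dots> \<le> Phi p x0" using opt[OF a(1,2,3) fx'] .
      also have "\<dots> \<le> Phi p z" using a(5) .
      also have "\<dots> \<le> VV (qv z) - ?pp (qv z)" unfolding Phi_def using V_ge[OF z(2)] by simp
      finally show "VV q' - ?pp q' \<le> VV (qv z) - ?pp (qv z)" .
    qed
    then show "qv z \<in> ?D" unfolding demand_def using z(1) by blast
  qed
  have qQ: "q \<in> QQ" and rQ: "r \<in> QQ" using Dprop qD rD by auto
  obtain x where x: "am_feasible n m k \<I> l u x q" "val x = VV q" using V_attained[OF qQ] by blast
  obtain y where y: "am_feasible n m k \<I> l u y r" "val y = VV r" using V_attained[OF rQ] by blast
  have fx: "feas x" and qx: "\<forall>i\<in>{1..n}. (\<Sum>j\<in>R i. x j) = q i" using x(1) amf_iff by auto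
  have fy: "feas y" and ry: "\<forall>i\<in>{1..n}. (\<Sum>j\<in>R i. y j) = r i" using y(1) amf_iff by auto
  have PhiEq: "Phi p x = Phi p y" using opt[OF qD x fy] opt[OF rD y fx] by simp
  define d where "d = (\<lambda>j. y j - x j)"
  have bq: "(\<Sum>j\<in>J. x j) = bsize n q" unfolding bsize_def sumJ[of x] by (rule sum.cong) (use qx in auto)
  have br: "(\<Sum>j\<in>J. y j) = bsize n r" unfolding bsize_def sumJ[of y] by (rule sum.cong) (use ry in auto)
  have dJ: "(\<Sum>j\<in>J. d j) = 0" unfolding d_def using bq br sz by (simp add: sum_subtractf)
  obtain cs where cs: "\<forall>j\<in>J. d j = (\<Sum>c\<leftarrow>cs. c j)" "\<forall>c\<in>set cs. (\<forall>I\<in>\<I>. conf c d I) \<and>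
           (\<exists>i\<in>{1..n}. \<exists>j\<in>{1..n}. \<forall>t\<in>{1..n}. (\<Sum>x\<in>R t. c x) = unit_vec j t - unit_vec i t)"
    using decomp[OF dJ] by blast
  have key: "\<And>c. c \<in> set cs \<Longrightarrow> qv (\<lambda>j. x j + c j) \<in> ?D \<and> qv (\<lambda>j. y j - c j) \<in> ?D"
  proof -
    fix c assume c: "c \<in> set cs"
    have cf: "\<forall>I\<in>\<I>. conf c d I" using cs(2) c by blast
    have f1: "feas (\<lambda>j. x j + c j)" unfolding feas_def
    proof
      fix I assume I: "I \<in> \<I>"
      have "conf c d I" using cf I by blast
      moreover have "l I \<le> (\<Sum>j\<in>I. x j) \<and> (\<Sum>j\<in>I. x j) \<le> u I" "l I \<le> (\<Sum>j\<in>I. y j) \<and> (\<Sum>j\<in>I. y j) \<le> u I"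
        using fx fy I unfolding feas_def by auto
      ultimately show "l I \<le> (\<Sum>j\<in>I. x j + c j) \<and> (\<Sum>j\<in>I. x j + c j) \<le> u I"
        unfolding conf_def d_def by (simp add: sum.distrib sum_subtractf) linarith
    qed
    have f2: "feas (\<lambda>j. y j - c j)" unfolding feas_def
    proof
      fix I assume I: "I \<in> \<I>"
      have "conf c d I" using cf I by blast
      moreover have "l I \<le> (\<Sum>j\<in>I. x j) \<and> (\<Sum>j\<in>I. x j) \<le> u I" "l I \<le> (\<Sum>j\<in>I. y j) \<and> (\<Sum>j\<in>I. y j) \<le> u I"
        using fx fy I unfolding feas_def by auto
      ultimately show "l I \<le> (\<Sum>j\<in>I. y j - c j) \<and> (\<Sum>j\<in>I. y j - c j) \<le> u I"
        unfolding conf_def d_def by (simp add: sum_subtractf) linarith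
    qed
    have "Phi p (\<lambda>j. x j + c j) \<le> Phi p x" using opt[OF qD x f1] .
    moreover have "Phi p (\<lambda>j. y j - c j) \<le> Phi p y" using opt[OF rD y f2] .
    ultimately have "Phi p c = 0" using Phi_add[of p x c] Phi_sub[of p y c] by simp
    then have "Phi p x \<le> Phi p (\<lambda>j. x j + c j)" "Phi p y \<le> Phi p (\<lambda>j. y j - c j)"
      using Phi_add[of p x c] Phi_sub[of p y c] by simp_all
    then show "qv (\<lambda>j. x j + c j) \<in> ?D \<and> qv (\<lambda>j. y j - c j) \<in> ?D"
      using bk[OF qD x f1] bk[OF rD y f2] by blast
  qed
  define form where "form c i j \<longleftrightarrow> (\<forall>t\<in>{1..n}. (\<Sum>x\<in>R t. c x) = unit_vec j t - unit_vec i t)"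
    for c :: "nat \<Rightarrow> int" and i j
  have csform: "\<And>c. c \<in> set cs \<Longrightarrow> \<exists>i\<in>{1..n}. \<exists>j\<in>{1..n}. form c i j" using cs(2) unfolding form_def by blast
  define \<sigma> where "\<sigma> = {(i,j). i \<in> {1..n} \<and> j \<in> {1..n} \<and> i \<noteq> j \<and> (\<exists>c\<in>set cs. form c i j)}"
  have RI: "\<And>i. i \<in> {1..n} \<Longrightarrow> R i \<in> \<I>" using Ti_I Ri_in by blast
  have dR: "\<And>i. i \<in> {1..n} \<Longrightarrow> (\<Sum>j\<in>R i. d j) = r i - q i"
    unfolding d_def using qx ry by (simp add: sum_subtractf)
  have confR: "\<And>c i. c \<in> set cs \<Longrightarrow> i \<in> {1..n} \<Longrightarrow> conf c d (R i)" using cs(2) RI by blast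
  have qout: "\<And>t. t \<notin> {1..n} \<Longrightarrow> q t = 0" using qQ unfolding am_bundles_def by blast
  have rout: "\<And>t. t \<notin> {1..n} \<Longrightarrow> r t = 0" using rQ unfolding am_bundles_def by blast
  have sumcs: "\<And>i. i \<in> {1..n} \<Longrightarrow> (\<Sum>c\<leftarrow>cs. (\<Sum>x\<in>R i. c x)) = r i - q i"
  proof -
    fix i assume i: "i \<in> {1..n}"
    have "(\<Sum>c\<leftarrow>cs. (\<Sum>x\<in>R i. c x)) = (\<Sum>x\<in>R i. (\<Sum>c\<leftarrow>cs. c x))" by (rule sum_list_swap[symmetric])
    also have "\<dots> = (\<Sum>x\<in>R i. d x)"
    proof (rule sum.cong[OF refl])
      fix z assume "z \<in> R i"
      then have "z \<in> J" using Rsub by blast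
      then show "(\<Sum>c\<leftarrow>cs. c z) = d z" using cs(1) by simp
    qed
    finally show "(\<Sum>c\<leftarrow>cs. (\<Sum>x\<in>R i. c x)) = r i - q i" using dR[OF i] by simp
  qed
  have formval: "\<And>c i j t. form c i j \<Longrightarrow> t \<in> {1..n} \<Longrightarrow> (\<Sum>x\<in>R t. c x) = unit_vec j t - unit_vec i t"
    unfolding form_def by blast
  show "\<exists>\<sigma>. \<sigma> \<subseteq> supp_pos n q r \<times> supp_pos n r q \<and>
              (\<forall>(i, j)\<in>\<sigma>. (\<lambda>t. q t - unit_vec i t + unit_vec j t) \<in> ?D \<and>
                           (\<lambda>t. r t + unit_vec i t - unit_vec j t) \<in> ?D) \<and>
              (\<forall>i\<in>supp_pos n q r. 1 \<le> card {j'. (i, j') \<in> \<sigma>} \<and>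
                                   int (card {j'. (i, j') \<in> \<sigma>}) \<le> q i - r i) \<and>
              (\<forall>j\<in>supp_pos n r q. 1 \<le> card {i'. (i', j) \<in> \<sigma>} \<and>
                                   int (card {i'. (i', j) \<in> \<sigma>}) \<le> r j - q j)"
  proof (intro exI[of _ \<sigma>] conjI)
    show "\<sigma> \<subseteq> supp_pos n q r \<times> supp_pos n r q"
    proof (clarify)
      fix i j assume ij: "(i,j) \<in> \<sigma>"
      then obtain c where c: "c \<in> set cs" "form c i j" "i \<in> {1..n}" "j \<in> {1..n}" "i \<noteq> j"
        unfolding \<sigma>_def by blast
      have "(\<Sum>x\<in>R i. c x) = -1" using formval[OF c(2) c(3)] c(5) unfolding unit_vec_def by simp
      then have "r i - q i < 0" using confR[OF c(1) c(3)] dR[OF c(3)] unfolding conf_def by force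
      moreover have "(\<Sum>x\<in>R j. c x) = 1" using formval[OF c(2) c(4)] c(5) unfolding unit_vec_def by simp
      then have "r j - q j > 0" using confR[OF c(1) c(4)] dR[OF c(4)] unfolding conf_def by force
      ultimately show "i \<in> supp_pos n q r \<and> j \<in> supp_pos n r q" unfolding supp_pos_def using c by auto
    qed
  next
    show "\<forall>(i, j)\<in>\<sigma>. (\<lambda>t. q t - unit_vec i t + unit_vec j t) \<in> ?D \<and> (\<lambda>t. r t + unit_vec i t - unit_vec j t) \<in> ?D"
    proof (clarify)
      fix i j assume ij: "(i,j) \<in> \<sigma>"
      then obtain c where c: "c \<in> set cs" "form c i j" "i \<in> {1..n}" "j \<in> {1..n}" "i \<noteq> j"
        unfolding \<sigma>_def by blast
      have e1: "(\<lambda>t. q t - unit_vec i t + unit_vec j t) = qv (\<lambda>j. x j + c j)"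
      proof
        fix t show "q t - unit_vec i t + unit_vec j t = qv (\<lambda>j. x j + c j) t"
        proof (cases "t \<in> {1..n}")
          case True
          then show ?thesis unfolding qv_def using qx formval[OF c(2) True] by (simp add: sum.distrib)
        next
          case False
          then have "t \<noteq> i" "t \<noteq> j" using c by auto
          then show ?thesis unfolding qv_def unit_vec_def using False qout rout by auto
        qed
      qed
      have e2: "(\<lambda>t. r t + unit_vec i t - unit_vec j t) = qv (\<lambda>j. y j - c j)"
      proof
        fix t show "r t + unit_vec i t - unit_vec j t = qv (\<lambda>j. y j - c j) t"
        proof (cases "t \<in> {1..n}")
          case True
          then show ?thesis unfolding qv_def using ry formval[OF c(2) True] by (simp add: sum_subtractf)
        next
          case False
          then have "t \<noteq> i" "t \<noteq> j" using c by auto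
          then show ?thesis unfolding qv_def unit_vec_def using False rout by auto
        qed
      qed
      show "(\<lambda>t. q t - unit_vec i t + unit_vec j t) \<in> ?D \<and> (\<lambda>t. r t + unit_vec i t - unit_vec j t) \<in> ?D"
        using key[OF c(1)] e1 e2 by simp
    qed
  next
    show "\<forall>i\<in>supp_pos n q r. 1 \<le> card {j'. (i, j') \<in> \<sigma>} \<and> int (card {j'. (i, j') \<in> \<sigma>}) \<le> q i - r i"
    proof
      fix i assume i: "i \<in> supp_pos n q r"
      then have i1: "i \<in> {1..n}" "q i - r i > 0" unfolding supp_pos_def by auto
      define g where "g c = (\<Sum>x\<in>R i. c x)" for c :: "nat \<Rightarrow> int"
      have gv: "\<forall>c\<in>set cs. g c = -1 \<or> g c = 0"
      proof
        fix c assume c: "c \<in> set cs"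
        obtain i' j' where f: "i' \<in> {1..n}" "j' \<in> {1..n}" "form c i' j'" using csform[OF c] by blast
        have "g c = unit_vec j' i - unit_vec i' i" unfolding g_def using formval[OF f(3) i1(1)] .
        moreover have "g c \<le> 0" using confR[OF c i1(1)] dR[OF i1(1)] i1(2) unfolding conf_def g_def by auto
        ultimately show "g c = -1 \<or> g c = 0" unfolding unit_vec_def by (auto split: if_splits)
      qed
      have cnt: "int (length (filter (\<lambda>c. g c = -1) cs)) = q i - r i"
        using sum_list_neg_count[OF gv] sumcs[OF i1(1)] unfolding g_def by simp
      define jof where "jof c = (SOME j. j \<in> {1..n} \<and> (\<Sum>x\<in>R j. c x) = 1)" for c :: "nat \<Rightarrow> int"
      have sub: "{j'. (i, j') \<in> \<sigma>} \<subseteq> jof ` set (filter (\<lambda>c. g c = -1) cs)"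
      proof
        fix j' assume "j' \<in> {j'. (i, j') \<in> \<sigma>}"
        then obtain c where c: "c \<in> set cs" "form c i j'" "j' \<in> {1..n}" "i \<noteq> j'"
          unfolding \<sigma>_def by blast
        have gc: "g c = -1" unfolding g_def using formval[OF c(2) i1(1)] c(4) unfolding unit_vec_def by simp
        have uniq: "\<And>j''. j'' \<in> {1..n} \<and> (\<Sum>x\<in>R j''. c x) = 1 \<Longrightarrow> j'' = j'"
        proof -
          fix j'' assume a: "j'' \<in> {1..n} \<and> (\<Sum>x\<in>R j''. c x) = 1"
          then have "unit_vec j' j'' - unit_vec i j'' = 1" using formval[OF c(2), of j''] by simp
          then show "j'' = j'" unfolding unit_vec_def by (auto split: if_splits)
        qed
        have "j' \<in> {1..n} \<and> (\<Sum>x\<in>R j'. c x) = 1"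
          using formval[OF c(2) c(3)] c(3,4) unfolding unit_vec_def by simp
        then have "jof c = j'" unfolding jof_def using uniq by (rule some_equality)
        then show "j' \<in> jof ` set (filter (\<lambda>c. g c = -1) cs)" using c(1) gc by force
      qed
      have "card {j'. (i, j') \<in> \<sigma>} \<le> card (jof ` set (filter (\<lambda>c. g c = -1) cs))"
        by (rule card_mono[OF finite_imageI[OF finite_set] sub])
      also have "\<dots> \<le> card (set (filter (\<lambda>c. g c = -1) cs))" by (rule card_image_le) simp
      also have "\<dots> \<le> length (filter (\<lambda>c. g c = -1) cs)" by (rule card_length)
      finally have up: "int (card {j'. (i, j') \<in> \<sigma>}) \<le> q i - r i" using cnt by linarith
      have "filter (\<lambda>c. g c = -1) cs \<noteq> []" using cnt i1(2) by auto
      then have "hd (filter (\<lambda>c. g c = -1) cs) \<in> set (filter (\<lambda>c. g c = -1) cs)" by (rule hd_in_set)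
      then obtain c where "c \<in> set (filter (\<lambda>c. g c = -1) cs)" by blast
      then have c: "c \<in> set cs" "g c = -1" by simp_all
      obtain i' j' where f: "i' \<in> {1..n}" "j' \<in> {1..n}" "form c i' j'" using csform[OF c(1)] by blast
      have "unit_vec j' i - unit_vec i' i = -1" using formval[OF f(3) i1(1)] c(2) unfolding g_def by simp
      then have "i' = i" "j' \<noteq> i" unfolding unit_vec_def by (auto split: if_splits)
      then have "(i, j') \<in> \<sigma>" unfolding \<sigma>_def using f c(1) i1(1) by blast
      moreover have "finite {j'. (i, j') \<in> \<sigma>}"
        by (rule finite_subset[of _ "{1..n}"]) (auto simp: \<sigma>_def)
      ultimately have "card {j'. (i, j') \<in> \<sigma>} > 0" by (auto simp: card_gt_0_iff)
      then have "card {j'. (i, j') \<in> \<sigma>} \<ge> 1" by simp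
      then show "1 \<le> card {j'. (i, j') \<in> \<sigma>} \<and> int (card {j'. (i, j') \<in> \<sigma>}) \<le> q i - r i" using up by simp
    qed
  next
    show "\<forall>j\<in>supp_pos n r q. 1 \<le> card {i'. (i', j) \<in> \<sigma>} \<and> int (card {i'. (i', j) \<in> \<sigma>}) \<le> r j - q j"
    proof
      fix i assume i: "i \<in> supp_pos n r q"
      then have i1: "i \<in> {1..n}" "r i - q i > 0" unfolding supp_pos_def by auto
      define g where "g c = (\<Sum>x\<in>R i. c x)" for c :: "nat \<Rightarrow> int"
      have gv: "\<forall>c\<in>set cs. g c = 1 \<or> g c = 0"
      proof
        fix c assume c: "c \<in> set cs"
        obtain i' j' where f: "i' \<in> {1..n}" "j' \<in> {1..n}" "form c i' j'" using csform[OF c] by blast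
        have "g c = unit_vec j' i - unit_vec i' i" unfolding g_def using formval[OF f(3) i1(1)] .
        moreover have "g c \<ge> 0" using confR[OF c i1(1)] dR[OF i1(1)] i1(2) unfolding conf_def g_def by auto
        ultimately show "g c = 1 \<or> g c = 0" unfolding unit_vec_def by (auto split: if_splits)
      qed
      have cnt: "int (length (filter (\<lambda>c. g c = 1) cs)) = r i - q i"
        using sum_list_pos_count[OF gv] sumcs[OF i1(1)] unfolding g_def by simp
      define iof where "iof c = (SOME j. j \<in> {1..n} \<and> (\<Sum>x\<in>R j. c x) = -1)" for c :: "nat \<Rightarrow> int"
      have sub: "{j'. (j', i) \<in> \<sigma>} \<subseteq> iof ` set (filter (\<lambda>c. g c = 1) cs)"
      proof
        fix j' assume "j' \<in> {j'. (j', i) \<in> \<sigma>}"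
        then obtain c where c: "c \<in> set cs" "form c j' i" "j' \<in> {1..n}" "j' \<noteq> i"
          unfolding \<sigma>_def by blast
        have gc: "g c = 1" unfolding g_def using formval[OF c(2) i1(1)] c(4) unfolding unit_vec_def by simp
        have uniq: "\<And>j''. j'' \<in> {1..n} \<and> (\<Sum>x\<in>R j''. c x) = -1 \<Longrightarrow> j'' = j'"
        proof -
          fix j'' assume a: "j'' \<in> {1..n} \<and> (\<Sum>x\<in>R j''. c x) = -1"
          then have "unit_vec i j'' - unit_vec j' j'' = -1" using formval[OF c(2), of j''] by simp
          then show "j'' = j'" unfolding unit_vec_def by (auto split: if_splits)
        qed
        have "j' \<in> {1..n} \<and> (\<Sum>x\<in>R j'. c x) = -1"
          using formval[OF c(2) c(3)] c(3,4) unfolding unit_vec_def by simp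
        then have "iof c = j'" unfolding iof_def using uniq by (rule some_equality)
        then show "j' \<in> iof ` set (filter (\<lambda>c. g c = 1) cs)" using c(1) gc by force
      qed
      have "card {j'. (j', i) \<in> \<sigma>} \<le> card (iof ` set (filter (\<lambda>c. g c = 1) cs))"
        by (rule card_mono[OF finite_imageI[OF finite_set] sub])
      also have "\<dots> \<le> card (set (filter (\<lambda>c. g c = 1) cs))" by (rule card_image_le) simp
      also have "\<dots> \<le> length (filter (\<lambda>c. g c = 1) cs)" by (rule card_length)
      finally have up: "int (card {j'. (j', i) \<in> \<sigma>}) \<le> r i - q i" using cnt by linarith
      have "filter (\<lambda>c. g c = 1) cs \<noteq> []" using cnt i1(2) by auto
      then have "hd (filter (\<lambda>c. g c = 1) cs) \<in> set (filter (\<lambda>c. g c = 1) cs)" by (rule hd_in_set)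
      then obtain c where "c \<in> set (filter (\<lambda>c. g c = 1) cs)" by blast
      then have c: "c \<in> set cs" "g c = 1" by simp_all
      obtain i' j' where f: "i' \<in> {1..n}" "j' \<in> {1..n}" "form c i' j'" using csform[OF c(1)] by blast
      have "unit_vec j' i - unit_vec i' i = 1" using formval[OF f(3) i1(1)] c(2) unfolding g_def by simp
      then have "j' = i" "i' \<noteq> i" unfolding unit_vec_def by (auto split: if_splits)
      then have "(i', i) \<in> \<sigma>" unfolding \<sigma>_def using f c(1) i1(1) by blast
      moreover have "finite {j'. (j', i) \<in> \<sigma>}"
        by (rule finite_subset[of _ "{1..n}"]) (auto simp: \<sigma>_def)
      ultimately have "card {j'. (j', i) \<in> \<sigma>} > 0" by (auto simp: card_gt_0_iff)
      then have "card {j'. (j', i) \<in> \<sigma>} \<ge> 1" by simp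
      then show "1 \<le> card {i'. (i', i) \<in> \<sigma>} \<and> int (card {i'. (i', i) \<in> \<sigma>}) \<le> r i - q i" using up by simp
    qed
  qed
qed

end

theorem theorem1:
  fixes n m :: nat and k :: "nat \<Rightarrow> nat" and w :: "nat \<Rightarrow> real" and \<I> :: "nat set set"
    and l u :: "nat set \<Rightarrow> int" and T :: "nat \<Rightarrow> nat set set"
  assumes "n \<ge> 2"
    and "assignment_message n m k w \<I> l u T"
  defines "Q \<equiv> am_bundles n m k \<I> l u"
    and "v \<equiv> am_valuation n m k w \<I> l u"
  shows "\<forall>p :: nat \<Rightarrow> real. \<forall>q\<in>demand n Q v p. \<forall>r\<in>demand n Q v p.
           bsize n q = Min (bsize n ` demand n Q v p) \<and> bsize n r = Min (bsize n ` demand n Q v p) \<longrightarrow>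
           (\<exists>\<sigma>. \<sigma> \<subseteq> supp_pos n q r \<times> supp_pos n r q \<and>
              (\<forall>(i, j)\<in>\<sigma>. (\<lambda>t. q t - unit_vec i t + unit_vec j t) \<in> demand n Q v p \<and>
                           (\<lambda>t. r t + unit_vec i t - unit_vec j t) \<in> demand n Q v p) \<and>
              (\<forall>i\<in>supp_pos n q r. 1 \<le> card {j'. (i, j') \<in> \<sigma>} \<and>
                                   int (card {j'. (i, j') \<in> \<sigma>}) \<le> q i - r i) \<and>
              (\<forall>j\<in>supp_pos n r q. 1 \<le> card {i'. (i', j) \<in> \<sigma>} \<and>
                                   int (card {i'. (i', j) \<in> \<sigma>}) \<le> r j - q j))"
  proof -
  interpret amsg n m k w \<I> l u T by unfold_locales (rule assms(2), rule assms(1))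
  show ?thesis unfolding Q_def v_def by (rule main)
qed

end
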